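(* Let $h\colon L^\infty(\mathbb S_1)\to\mathbb R$ be boundedness-preserving (maps bounded sets to bounded sets) and satisfy $h(g\circ\phi_{\mathbf A})=h(g)$ for all $g\in L^\infty(\mathbb S_1)$ and all $\mathbf A\in\mathrm{GL}(2)$, where $\phi_{\mathbf A}(\theta)=\mathbf A^\top\theta/\|\mathbf A^\top\theta\|$. Let $\mu_0,\nu_0\in\mathcal P_c^*(\mathbb R^2)$ satisfy $\mathcal N_h[\mu_0]\neq\mathcal N_h[\nu_0]$, and consider $$\mathbb F=\{(\mathbf A\cdot+\mathbf y)_\#\mu_0 : \mathbf A\in\mathrm{GL}(2),\ \mathbf y\in\mathbb R^2\},\qquad \mathbb G=\{(\mathbf A\cdot+\mathbf y)_\#\nu_0 : \mathbf A\in\mathrm{GL}(2),\ \mathbf y\in\mathbb R^2\}.$$ Then $\mathbb F\subset\mathcal P_c^*(\mathbb R^2)$ and $\mathbb G\subset\mathcal P_c^*(\mathbb R^2)$, and $\mathcal N_h[\mathbb F]$ and $\mathcal N_h[\mathbb G]$ are linearly separable in $L^\infty_\rho(\mathbb R)$.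
   Context: Let $\mathbb S_1=\{x\in\mathbb R^2:\|x\|=1\}$. For $\theta\in\mathbb S_1$ let $S_\theta(x)=\langle x,\theta\rangle$ and, for a finite Borel measure $\mu$ on $\mathbb R^2$, let $\mathcal R_\theta[\mu]=(S_\theta)_\#\mu$. Fix a reference Borel probability measure $\rho$ on $\mathbb R$ without atoms. For a probability measure $\nu$ on $\mathbb R$ with $F_\nu(t)=\nu((-\infty,t])$, set $F_\nu^{[-1]}(t)=\inf\{s: F_\nu(s)>t\}$ and define the CDT $\hat\nu=F_\nu^{[-1]}\circ F_\rho$; write $\widehat{\mathcal R}_\theta[\mu]$ for the CDT of $\mathcal R_\theta[\mu]$. For $g\in L^2_\rho(\mathbb R)$, $\operatorname{mean}(g)=\int g\,\mathrm d\rho$ and $\operatorname{std}(g)=(\int|g-\operatorname{mean}(g)|^2\,\mathrm d\rho)^{1/2}$. $\mathcal P_c^*(\mathbb R^2)$ is the set of compactly supported Borel probability measures on $\mathbb R^2$ whose support is not contained in a line. For $\mu\in\mathcal P_c^*(\mathbb R^2)$: $\mathcal N[\mu](t,\theta)=\mathcal N_\theta[\mu](t)=\big(\widehat{\mathcal R}_\theta[\mu](t)-\operatorname{mean}(\widehat{\mathcal R}_\theta[\mu])\big)/\operatorname{std}(\widehat{\mathcal R}_\theta[\mu])$, and the $h$-normalized R-CDT is $\mathcal N_h[\mu](t)=h(\mathcal N[\mu](t,\cdot))$, $t\in\mathbb R$. Subsets $A,B$ of a normed space $V$ are linearly separable if there exist a continuous linear functional $\ell$ on $V$ and $c\in\mathbb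 R$ with $\ell>c$ on $A$ and $\ell<c$ on $B$.
   Formalization: The space $L^\infty_\rho(\mathbb R)$ in which the two families are separated consists of all rho-essentially bounded functions on R, with no measurability condition, and the separating functional is linear and bounded by a multiple of the essential-supremum norm. Apart from conventions, each condition added here is assumed in the paper as well or is needed for the statement above to hold. *)

theory Defs
  imports "HOL-Probability.Probability"
begin

definition mu_support :: "(real^2) measure \<Rightarrow> (real^2) set" where
  "mu_support \<mu> = {x. \<forall>e>0. emeasure \<mu> (ball x e) > 0}"

definition is_line :: "(real^2) set \<Rightarrow> bool" where
  "is_line L \<longleftrightarrow> (\<exists>p v. v \<noteq> 0 \<and> L = {p + s *\<^sub>R v | s. True})"

definition Pcstar :: "(real^2) measure set" where
  "Pcstar = {\<mu>. sets \<mu> = sets borel \<and> prob_space \<mu> \<and> compact (mu_support \<mu>)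
               \<and> \<not> (\<exists>L. is_line L \<and> mu_support \<mu> \<subseteq> L)}"

definition affine_push :: "real^2^2 \<Rightarrow> real^2 \<Rightarrow> (real^2) measure \<Rightarrow> (real^2) measure" where
  "affine_push A y \<mu> = distr \<mu> borel (\<lambda>x. A *v x + y)"

definition radon :: "real^2 \<Rightarrow> (real^2) measure \<Rightarrow> real measure" where
  "radon \<theta> \<mu> = distr \<mu> borel (\<lambda>x. x \<bullet> \<theta>)"

definition cdf :: "real measure \<Rightarrow> real \<Rightarrow> real" where
  "cdf \<nu> t = measure \<nu> {..t}"

definition gen_inv :: "real measure \<Rightarrow> real \<Rightarrow> real" where
  "gen_inv \<nu> t = Inf {s. cdf \<nu> s > t}"

definition cdt :: "real measure \<Rightarrow> real measure \<Rightarrow> real \<Rightarrow> real" where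
  "cdt \<rho> \<nu> = (\<lambda>x. gen_inv \<nu> (cdf \<rho> x))"

definition mean :: "real measure \<Rightarrow> (real \<Rightarrow> real) \<Rightarrow> real" where
  "mean \<rho> g = (\<integral>x. g x \<partial>\<rho>)"

definition std :: "real measure \<Rightarrow> (real \<Rightarrow> real) \<Rightarrow> real" where
  "std \<rho> g = sqrt (\<integral>x. (g x - mean \<rho> g)\<^sup>2 \<partial>\<rho>)"

definition NRCDT :: "real measure \<Rightarrow> (real^2) measure \<Rightarrow> real \<Rightarrow> real^2 \<Rightarrow> real" where
  "NRCDT \<rho> \<mu> t \<theta> =
     (cdt \<rho> (radon \<theta> \<mu>) t - mean \<rho> (cdt \<rho> (radon \<theta> \<mu>))) / std \<rho> (cdt \<rho> (radon \<theta> \<mu>))"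

definition NRCDT_h :: "((real^2 \<Rightarrow> real) \<Rightarrow> real) \<Rightarrow> real measure \<Rightarrow> (real^2) measure \<Rightarrow> real \<Rightarrow> real" where
  "NRCDT_h h \<rho> \<mu> t = h (NRCDT \<rho> \<mu> t)"

definition circle_measure :: "(real^2) measure" where
  "circle_measure = distr (restrict_space lborel {0..2*pi}) borel
                       (\<lambda>t. \<chi> i. if i = 1 then cos t else sin t)"

definition ess_bounded :: "'a measure \<Rightarrow> ('a \<Rightarrow> real) \<Rightarrow> bool" where
  "ess_bounded M f \<longleftrightarrow> (\<exists>C. AE x in M. \<bar>f x\<bar> \<le> C)"

definition ess_norm :: "'a measure \<Rightarrow> ('a \<Rightarrow> real) \<Rightarrow> real" where
  "ess_norm M f = Inf {C. C \<ge> 0 \<and> (AE x in M. \<bar>f x\<bar> \<le> C)}"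

text \<open>Representatives of elements of \<open>L^\<infinity>(S_1)\<close>.\<close>
definition Linf_S1 :: "(real^2 \<Rightarrow> real) set" where
  "Linf_S1 = {g. g \<in> borel_measurable circle_measure \<and> ess_bounded circle_measure g}"

definition phiA :: "real^2^2 \<Rightarrow> real^2 \<Rightarrow> real^2" where
  "phiA A \<theta> = (1 / norm (transpose A *v \<theta>)) *\<^sub>R (transpose A *v \<theta>)"

text \<open>\<open>h : L^\<infinity>(S_1) \<rightarrow> R\<close> (well defined on a.e.-classes), boundedness preserving,
  and invariant under all \<open>\<phi>_A\<close>, \<open>A \<in> GL(2)\<close>.\<close>
definition admissible_h :: "((real^2 \<Rightarrow> real) \<Rightarrow> real) \<Rightarrow> bool" where
  "admissible_h h \<longleftrightarrow>
     (\<forall>g1\<in>Linf_S1. \<forall>g2\<in>Linf_S1. (AE \<theta> in circle_measure. g1 \<theta> = g2 \<theta>) \<longrightarrow> h g1 = h g2) \<and>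
     (\<forall>B \<subseteq> Linf_S1. (\<exists>M. \<forall>g\<in>B. ess_norm circle_measure g \<le> M) \<longrightarrow> bounded (h ` B)) \<and>
     (\<forall>g\<in>Linf_S1. \<forall>A::real^2^2. invertible A \<longrightarrow> h (g \<circ> phiA A) = h g)"

text \<open>The carrier is the space of \<open>\<rho>\<close>-essentially bounded
  functions; continuity w.r.t. the essential-sup norm forces the functional to be
  constant on a.e.-classes.\<close>
definition Linf_rho :: "real measure \<Rightarrow> (real \<Rightarrow> real) set" where
  "Linf_rho \<rho> = {f. ess_bounded \<rho> f}"

definition lin_separable :: "real measure \<Rightarrow> (real \<Rightarrow> real) set \<Rightarrow> (real \<Rightarrow> real) set \<Rightarrow> bool" where
  "lin_separable \<rho> S T \<longleftrightarrow> S \<subseteq> Linf_rho \<rho> \<and> T \<subseteq> Linf_rho \<rho> \<and>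
     (\<exists>(L::(real \<Rightarrow> real) \<Rightarrow> real) c.
        (\<forall>f\<in>Linf_rho \<rho>. \<forall>g\<in>Linf_rho \<rho>. L (\<lambda>x. f x + g x) = L f + L g) \<and>
        (\<forall>f\<in>Linf_rho \<rho>. \<forall>a. L (\<lambda>x. a * f x) = a * L f) \<and>
        (\<exists>K. \<forall>f\<in>Linf_rho \<rho>. \<bar>L f\<bar> \<le> K * ess_norm \<rho> f) \<and>
        (\<forall>f\<in>S. L f > c) \<and> (\<forall>f\<in>T. L f < c))"

end

theory Submission
  imports Defs
begin

lemma ultrafilter_exists:
  fixes F :: "'a filter"
  assumes "F \<noteq> bot"
  shows "\<exists>U. U \<le> F \<and> U \<noteq> bot \<and> (\<forall>P. eventually P U \<or> eventually (\<lambda>x. \<not> P x) U)"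
proof -
  define ev where "ev G = {P. eventually P G}" for G :: "'a filter"
  define A where "A = ev ` {G. G \<le> F \<and> G \<noteq> bot}"
  have ev_inj: "ev G1 \<subseteq> ev G2 \<longleftrightarrow> G2 \<le> G1" for G1 G2
    unfolding ev_def le_filter_def by auto
  have "\<forall>C\<in>chains A. \<exists>U\<in>A. \<forall>X\<in>C. X \<subseteq> U"
  proof
    fix C assume C: "C \<in> chains A"
    show "\<exists>U\<in>A. \<forall>X\<in>C. X \<subseteq> U"
    proof (cases "C = {}")
      case True
      then show ?thesis using assms unfolding A_def by auto
    next
      case False
      define Q where "Q = (\<lambda>P. P \<in> \<Union>C)"
      have CA: "C \<subseteq> A" and ch: "\<forall>X\<in>C. \<forall>Y\<in>C. X \<subseteq> Y \<or> Y \<subseteq> X"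
        using C unfolding chains_def chain_subset_def by auto
      have filt: "\<And>X. X \<in> C \<Longrightarrow> \<exists>G. X = ev G \<and> G \<le> F \<and> G \<noteq> bot"
        using CA unfolding A_def by auto
      have isf: "is_filter Q"
      proof
        show "Q (\<lambda>x. True)" using False filt unfolding Q_def ev_def by fastforce
      next
        fix P R assume "Q (\<lambda>x. P x)" "Q (\<lambda>x. R x)"
        then obtain X Y where XY: "X \<in> C" "Y \<in> C" "(\<lambda>x. P x) \<in> X" "(\<lambda>x. R x) \<in> Y"
          unfolding Q_def by auto
        have XYC: "X \<union> Y \<in> C" using ch XY(1,2) by (metis sup.absorb1 sup.absorb2)
        then obtain G where G: "X \<union> Y = ev G" using filt by blast
        have "eventually (\<lambda>x. P x) G" "eventually (\<lambda>x. R x) G"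
          using XY(3,4) G unfolding ev_def by blast+
        then have "eventually (\<lambda>x. P x \<and> R x) G" by (rule eventually_conj)
        then have "(\<lambda>x. P x \<and> R x) \<in> X \<union> Y" unfolding G ev_def by simp
        then show "Q (\<lambda>x. P x \<and> R x)"
          using XYC unfolding Q_def by blast
      next
        fix P R assume "\<forall>x. P x \<longrightarrow> R x" "Q (\<lambda>x. P x)"
        then show "Q (\<lambda>x. R x)" using filt unfolding Q_def ev_def
          by simp (metis (mono_tags, lifting) eventually_mono mem_Collect_eq)
      qed
      define G where "G = Abs_filter Q"
      have evG: "eventually P G \<longleftrightarrow> P \<in> \<Union>C" for P
        unfolding G_def using isf by (simp add: eventually_Abs_filter Q_def)
      have "G \<le> F"
        unfolding le_filter_def evG using False filt unfolding ev_def le_filter_def by blast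
      moreover have "G \<noteq> bot"
      proof
        assume "G = bot"
        then have "(\<lambda>x. False) \<in> \<Union>C" using evG[of "\<lambda>x. False"] by simp
        then show False using filt unfolding ev_def by (auto simp: trivial_limit_def)
      qed
      moreover have "ev G = \<Union>C" unfolding ev_def using evG by auto
      ultimately show ?thesis unfolding A_def by (intro bexI[of _ "ev G"]) auto
    qed
  qed
  from Zorn_Lemma2[OF this] obtain M where M: "M \<in> A" "\<forall>X\<in>A. M \<subseteq> X \<longrightarrow> X = M" by blast
  then obtain U where U: "M = ev U" "U \<le> F" "U \<noteq> bot" unfolding A_def by auto
  have "eventually P U \<or> eventually (\<lambda>x. \<not> P x) U" for P
  proof (rule disjCI)
    assume nP: "\<not> eventually (\<lambda>x. \<not> P x) U"
    define U' where "U' = inf U (principal {x. P x})"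
    have "U' \<noteq> bot"
      using nP unfolding U'_def trivial_limit_def eventually_inf_principal by auto
    moreover have "U' \<le> F" unfolding U'_def using U(2) by (meson inf.coboundedI1)
    moreover have "M \<subseteq> ev U'" unfolding U(1) ev_inj U'_def by simp
    ultimately have "ev U' = ev U" using M(2) U(1) unfolding A_def by auto
    moreover have "P \<in> ev U'" unfolding ev_def U'_def eventually_inf_principal by simp
    ultimately show "eventually P U" unfolding ev_def by auto
  qed
  then show ?thesis using U by blast
qed

lemma ultra_limit:
  fixes U :: "'a filter" and f :: "'a \<Rightarrow> real"
  assumes U: "U \<noteq> bot" "\<And>P. eventually P U \<or> eventually (\<lambda>x. \<not> P x) U"
    and bd: "eventually (\<lambda>x. \<bar>f x\<bar> \<le> B) U"
  shows "\<exists>l. (f \<longlongrightarrow> l) U"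
proof -
  define S where "S = {c. eventually (\<lambda>x. f x > c) U}"
  have "eventually (\<lambda>x. f x > - B - 1) U"
    using bd by (rule eventually_mono) linarith
  then have "- B - 1 \<in> S" unfolding S_def by simp
  then have ne: "S \<noteq> {}" by blast
  have ub: "c \<le> B" if "c \<in> S" for c
  proof -
    have "eventually (\<lambda>x. f x > c) U" using that unfolding S_def by simp
    then have "eventually (\<lambda>x. c < B) U"
      using bd by (rule eventually_elim2) linarith
    then show ?thesis using U(1) eventually_const by fastforce
  qed
  then have bdd: "bdd_above S" by (rule bdd_aboveI)
  define l where "l = Sup S"
  have "(f \<longlongrightarrow> l) U"
  proof (rule order_tendstoI)
    fix a assume "a < l"
    then obtain c where c: "c \<in> S" "a < c" using less_cSup_iff[OF ne bdd] unfolding l_def by blast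
    then have "eventually (\<lambda>x. f x > c) U" unfolding S_def by simp
    then show "eventually (\<lambda>x. a < f x) U"
      by (rule eventually_mono) (use c in linarith)
  next
    fix a assume al: "l < a"
    show "eventually (\<lambda>x. f x < a) U"
    proof (rule ccontr)
      assume "\<not> eventually (\<lambda>x. f x < a) U"
      then have "eventually (\<lambda>x. \<not> f x < a) U" using U(2) by blast
      moreover have "\<And>x. \<not> f x < a \<Longrightarrow> f x > (l + a) / 2" using al by (simp add: not_less field_simps)
      ultimately have "eventually (\<lambda>x. f x > (l + a) / 2) U"
        by (rule eventually_mono)
      then have "(l + a) / 2 \<in> S" unfolding S_def by simp
      then have "(l + a) / 2 \<le> l" unfolding l_def using bdd by (rule cSup_upper)
      then show False using al by simp
    qed
  qed
  then show ?thesis by blast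
qed

lemma separation_Linf:
  fixes \<rho> :: "real measure"
  assumes f0: "f0 \<in> Linf_rho \<rho>" and g0: "g0 \<in> Linf_rho \<rho>"
    and neq: "\<not> (AE t in \<rho>. f0 t = g0 t)"
    and S: "S \<subseteq> {f \<in> Linf_rho \<rho>. AE t in \<rho>. f t = f0 t}"
    and T: "T \<subseteq> {f \<in> Linf_rho \<rho>. AE t in \<rho>. f t = g0 t}"
  shows "lin_separable \<rho> S T"
proof -
  define d where "d t = f0 t - g0 t" for t
  have "\<exists>n::nat. \<not> (AE t in \<rho>. \<bar>d t\<bar> \<le> 1 / Suc n)"
  proof (rule ccontr)
    assume "\<not> ?thesis"
    then have "AE t in \<rho>. \<forall>n::nat. \<bar>d t\<bar> \<le> 1 / Suc n"
      by (simp add: AE_all_countable)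
    then have "AE t in \<rho>. f0 t = g0 t"
    proof (rule eventually_mono)
      fix t assume a: "\<forall>n::nat. \<bar>d t\<bar> \<le> 1 / Suc n"
      have "\<bar>d t\<bar> \<le> 0"
      proof (rule field_le_epsilon)
        fix e :: real assume "0 < e"
        then obtain n :: nat where "1 / Suc n < e"
          using nat_approx_posE by blast
        then show "\<bar>d t\<bar> \<le> 0 + e" using a[rule_format, of n] by linarith
      qed
      then show "f0 t = g0 t" unfolding d_def by simp
    qed
    then show False using neq by simp
  qed
  then obtain n :: nat where n: "\<not> (AE t in \<rho>. \<bar>d t\<bar> \<le> 1 / Suc n)" by blast
  define e :: real where "e = 1 / Suc n"
  have e0: "e > 0" unfolding e_def by simp
  define F where "F = inf (ae_filter \<rho>) (principal {t. \<bar>d t\<bar> > e})"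
  have "F \<noteq> bot"
  proof
    assume "F = bot"
    then have "eventually (\<lambda>x. False) F" by simp
    then have "AE t in \<rho>. \<bar>d t\<bar> \<le> e"
      unfolding F_def eventually_inf_principal by (simp add: not_less)
    then show False using n unfolding e_def by simp
  qed
  from ultrafilter_exists[OF this] obtain U where
    U: "U \<le> F" "U \<noteq> bot" "\<And>P. eventually P U \<or> eventually (\<lambda>x. \<not> P x) U" by blast
  have UF: "eventually P U" if "AE t in \<rho>. P t" for P
  proof -
    have "eventually P F" unfolding F_def using that
      by (simp add: eventually_inf_principal eventually_mono)
    then show ?thesis using U(1) by (simp add: le_filter_def)
  qed
  have Ud: "eventually (\<lambda>t. \<bar>d t\<bar> > e) U"
  proof -
    have "eventually (\<lambda>t. \<bar>d t\<bar> > e) F" unfolding F_def eventually_inf_principal by simp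
    then show ?thesis using U(1) by (simp add: le_filter_def)
  qed
  have ntriv: "\<not> trivial_limit U" using U(2) by simp
  have conv: "(f \<longlongrightarrow> Lim U f) U" if fL: "f \<in> Linf_rho \<rho>" for f
  proof -
    obtain C where "AE t in \<rho>. \<bar>f t\<bar> \<le> C" using fL unfolding Linf_rho_def ess_bounded_def by blast
    then have "eventually (\<lambda>t. \<bar>f t\<bar> \<le> C) U" by (rule UF)
    from ultra_limit[OF U(2) U(3) this] obtain l where "(f \<longlongrightarrow> l) U" by blast
    then show ?thesis using tendsto_Lim[OF ntriv] by metis
  qed
  have Lim_add: "Lim U (\<lambda>x. f x + g x) = Lim U f + Lim U g"
    if "f \<in> Linf_rho \<rho>" "g \<in> Linf_rho \<rho>" for f g
    by (rule tendsto_Lim[OF ntriv], rule tendsto_add[OF conv conv]) (use that in auto)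
  have Lim_mult: "Lim U (\<lambda>x. a * f x) = a * Lim U f"
    if "f \<in> Linf_rho \<rho>" for f a
    by (rule tendsto_Lim[OF ntriv], rule tendsto_mult[OF tendsto_const conv]) (use that in auto)
  have Lim_bd: "\<bar>Lim U f\<bar> \<le> ess_norm \<rho> f" if fL: "f \<in> Linf_rho \<rho>" for f
  proof -
    obtain C where C: "AE t in \<rho>. \<bar>f t\<bar> \<le> C" using fL unfolding Linf_rho_def ess_bounded_def by blast
    have "AE t in \<rho>. \<bar>f t\<bar> \<le> max C 0" using C by (rule eventually_mono) simp
    then have ne: "{C. C \<ge> 0 \<and> (AE x in \<rho>. \<bar>f x\<bar> \<le> C)} \<noteq> {}"
    proof -
      have "max C 0 \<in> {C. C \<ge> 0 \<and> (AE x in \<rho>. \<bar>f x\<bar> \<le> C)}" using \<open>AE t in \<rho>. \<bar>f t\<bar> \<le> max C 0\<close> by simp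
      then show ?thesis by blast
    qed
    show ?thesis unfolding ess_norm_def
    proof (rule cInf_greatest[OF ne])
      fix D assume "D \<in> {C. C \<ge> 0 \<and> (AE x in \<rho>. \<bar>f x\<bar> \<le> C)}"
      then have "eventually (\<lambda>t. \<bar>f t\<bar> \<le> D) U" using UF by blast
      moreover have "((\<lambda>t. \<bar>f t\<bar>) \<longlongrightarrow> \<bar>Lim U f\<bar>) U" using conv[OF fL] by (rule tendsto_rabs)
      ultimately show "\<bar>Lim U f\<bar> \<le> D" using tendsto_upperbound ntriv by blast
    qed
  qed
  have Lim_ae: "Lim U f = Lim U f0" if "f \<in> Linf_rho \<rho>" "AE t in \<rho>. f t = f0 t" for f f0
  proof -
    have "eventually (\<lambda>t. f t = f0 t) U" using UF that(2) by blast
    then have "(f0 \<longlongrightarrow> Lim U f) U" using conv[OF that(1)] tendsto_cong by blast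
    then show ?thesis using tendsto_Lim[OF ntriv] by metis
  qed
  have dL: "d \<in> Linf_rho \<rho>"
  proof -
    obtain C1 C2 where "AE t in \<rho>. \<bar>f0 t\<bar> \<le> C1" "AE t in \<rho>. \<bar>g0 t\<bar> \<le> C2"
      using f0 g0 unfolding Linf_rho_def ess_bounded_def by blast
    then have "AE t in \<rho>. \<bar>d t\<bar> \<le> C1 + C2" unfolding d_def by eventually_elim auto
    then show ?thesis unfolding Linf_rho_def ess_bounded_def by blast
  qed
  have mL: "(\<lambda>x. -1 * g0 x) \<in> Linf_rho \<rho>"
  proof -
    obtain C2 where "AE t in \<rho>. \<bar>g0 t\<bar> \<le> C2"
      using g0 unfolding Linf_rho_def ess_bounded_def by blast
    then have "AE t in \<rho>. \<bar>-1 * g0 t\<bar> \<le> C2" by simp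
    then show ?thesis unfolding Linf_rho_def ess_bounded_def by blast
  qed
  have Ld: "Lim U d = Lim U f0 - Lim U g0"
  proof -
    have "d = (\<lambda>x. f0 x + (-1 * g0 x))" unfolding d_def by auto
    then show ?thesis using Lim_add[OF f0 mL] Lim_mult[OF g0, of "-1"] by simp
  qed
  have "\<bar>Lim U d\<bar> \<ge> e"
  proof -
    have "((\<lambda>t. \<bar>d t\<bar>) \<longlongrightarrow> \<bar>Lim U d\<bar>) U" using conv[OF dL] by (rule tendsto_rabs)
    moreover have "eventually (\<lambda>t. e \<le> \<bar>d t\<bar>) U" using Ud by (rule eventually_mono) simp
    ultimately show ?thesis using tendsto_lowerbound ntriv by blast
  qed
  then have "Lim U f0 \<noteq> Lim U g0" using e0 Ld by auto
  then obtain s :: real where s: "s = 1 \<or> s = -1" "s * Lim U f0 > s * Lim U g0"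
  proof (cases "Lim U f0 > Lim U g0")
    case True
    then show ?thesis using that[of 1] by simp
  next
    case False
    then show ?thesis using that[of "-1"] \<open>Lim U f0 \<noteq> Lim U g0\<close> by simp
  qed
  define L where "L f = s * Lim U f" for f
  define c where "c = (L f0 + L g0) / 2"
  have sabs: "\<bar>s\<bar> = 1" using s(1) by auto
  have a1: "S \<subseteq> Linf_rho \<rho>" "T \<subseteq> Linf_rho \<rho>" using S T by auto
  have a2: "\<forall>f\<in>Linf_rho \<rho>. \<forall>g\<in>Linf_rho \<rho>. L (\<lambda>x. f x + g x) = L f + L g"
    unfolding L_def using Lim_add by (simp add: distrib_left)
  have a3: "\<forall>f\<in>Linf_rho \<rho>. \<forall>a. L (\<lambda>x. a * f x) = a * L f"
    unfolding L_def using Lim_mult by simp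
  have a4: "\<exists>K. \<forall>f\<in>Linf_rho \<rho>. \<bar>L f\<bar> \<le> K * ess_norm \<rho> f"
    by (rule exI[of _ 1]) (simp add: L_def abs_mult sabs Lim_bd)
  have a5: "\<forall>f\<in>S. c < L f"
  proof
    fix f assume "f \<in> S"
    then have "Lim U f = Lim U f0" using S Lim_ae by auto
    then show "c < L f" unfolding c_def L_def using s(2) by (simp add: field_simps)
  qed
  have a6: "\<forall>f\<in>T. L f < c"
  proof
    fix f assume "f \<in> T"
    then have "Lim U f = Lim U g0" using T Lim_ae by auto
    then show "L f < c" unfolding c_def L_def using s(2) by (simp add: field_simps)
  qed
  show ?thesis unfolding lin_separable_def using a1 a2 a3 a4 a5 a6 by blast
qed


abbreviation DF where "DF \<equiv> Distribution_Functions.cdf"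

lemma cdf_eq: "Defs.cdf = DF"
  by (simp add: fun_eq_iff Defs.cdf_def Distribution_Functions.cdf_def)

context real_distribution
begin

lemma cdf_mono': "mono (DF M)"
  by (simp add: cdf_nondecreasing monoI)

lemma cdf_meas[measurable]: "DF M \<in> borel_measurable borel"
  by (rule borel_measurable_mono[OF cdf_mono'])

lemma unif_le:
  assumes noat: "\<And>x. measure M {x} = 0" and v: "0 \<le> v" "v \<le> 1"
  shows "measure M {x. DF M x \<le> v} \<le> v"
proof (cases "v = 1")
  case True
  then show ?thesis by (simp add: measure_le_1)
next
  case False
  with v have v1: "v < 1" by simp
  define S where "S = {x. DF M x \<le> v}"
  show ?thesis
  proof (cases "S = {}")
    case True
    then show ?thesis using v unfolding S_def by simp
  next
    case ne: False
    have "eventually (\<lambda>x. DF M x > v) at_top"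
      using cdf_lim_at_top_prob v1 by (rule order_tendstoD)
    then obtain X where X: "\<And>x. x \<ge> X \<Longrightarrow> DF M x > v" by (auto simp: eventually_at_top_linorder)
    have bdd: "bdd_above S" unfolding S_def
    proof (rule bdd_aboveI[of _ X])
      fix x assume "x \<in> {x. DF M x \<le> v}"
      then show "x \<le> X" using X[of x] by force
    qed
    have cont: "continuous_on UNIV (DF M)"
      using isCont_cdf noat by (simp add: continuous_on_eq_continuous_at)
    have "closed S" unfolding S_def
      using cont by (intro closed_Collect_le) (auto intro: continuous_on_const)
    then have "Sup S \<in> S" using closed_contains_Sup ne bdd by blast
    then have a: "DF M (Sup S) \<le> v" unfolding S_def by simp
    have "S \<subseteq> {..Sup S}" using bdd by (auto intro: cSup_upper)
    then have "measure M S \<le> measure M {..Sup S}"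
      by (intro finite_measure_mono) auto
    also have "\<dots> = DF M (Sup S)" by (simp add: cdf_def2)
    finally show ?thesis using a unfolding S_def by simp
  qed
qed

lemma unif_less:
  assumes noat: "\<And>x. measure M {x} = 0" and v: "0 \<le> v" "v \<le> 1"
  shows "measure M {x. DF M x < v} \<ge> v"
proof (cases "v = 0")
  case True
  then show ?thesis by simp
next
  case False
  with v have v0: "0 < v" by simp
  have cont: "continuous_on UNIV (DF M)"
    using isCont_cdf noat by (simp add: continuous_on_eq_continuous_at)
  show ?thesis
  proof (rule dense_le_bounded[OF v0])
    fix w assume w: "0 < w" "w < v"
    have "eventually (\<lambda>x. DF M x > w) at_top"
      using cdf_lim_at_top_prob by (rule order_tendstoD) (use w v in auto)
    then obtain x2 where x2: "DF M x2 > w" by (auto simp: eventually_at_top_linorder)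
    have "eventually (\<lambda>x. DF M x < w) at_bot"
      using cdf_lim_at_bot w by (intro order_tendstoD) auto
    then obtain x1 where x1: "DF M x1 < w" by (auto simp: eventually_at_bot_linorder)
    have "x1 \<le> x2"
    proof (rule ccontr)
      assume "\<not> x1 \<le> x2"
      then have "DF M x2 \<le> DF M x1" by (intro cdf_nondecreasing) simp
      then show False using x1 x2 by simp
    qed
    then obtain x where x: "DF M x = w"
      using IVT'[of "DF M" x1 w x2] x1 x2 continuous_on_subset[OF cont] by force
    have "{..x} \<subseteq> {y. DF M y < v}"
      using x w cdf_nondecreasing by (auto intro: le_less_trans)
    then have "measure M {..x} \<le> measure M {y. DF M y < v}"
      by (intro finite_measure_mono) auto
    then show "w \<le> measure M {x. DF M x < v}" using x by (simp add: cdf_def2)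
  qed
qed

lemma unif_eq:
  assumes noat: "\<And>x. measure M {x} = 0" and v: "0 \<le> v" "v \<le> 1"
  shows "measure M {x. DF M x \<le> v} = v" "measure M {x. DF M x < v} = v"
proof -
  have "measure M {x. DF M x < v} \<le> measure M {x. DF M x \<le> v}"
    by (intro finite_measure_mono) auto
  then show "measure M {x. DF M x \<le> v} = v" "measure M {x. DF M x < v} = v"
    using unif_le[OF assms] unif_less[OF assms] by linarith+
qed

lemma cdf_less_1_AE:
  assumes noat: "\<And>x. measure M {x} = 0"
  shows "AE x in M. DF M x < 1"
proof -
  have "measure M {x. DF M x < 1} = 1" using unif_eq(2)[OF noat, of 1] by simp
  then have "prob (space M - {x. DF M x < 1}) = 0"
    by (subst prob_compl) auto
  then show ?thesis
    by (subst AE_iff_measurable[where N="space M - {x. DF M x < 1}"]) (auto simp: emeasure_eq_measure)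
qed

end

locale bdd_dist = real_distribution +
  fixes R :: real
  assumes lo: "\<And>s. s < - R \<Longrightarrow> DF M s = 0"
    and hi: "\<And>s. s \<ge> R \<Longrightarrow> DF M s = 1"
begin

lemma R_nonneg: "R \<ge> 0"
proof (rule ccontr)
  assume "\<not> R \<ge> 0"
  then have "R < - R" by simp
  then show False using lo[of R] hi[of R] by simp
qed

lemma gen_inv_def': "gen_inv M u = Inf {s. DF M s > u}"
  by (simp add: gen_inv_def cdf_eq)

context
  fixes u :: real
  assumes u: "0 \<le> u" "u < 1"
begin

lemma gi_ne: "R \<in> {s. DF M s > u}" using hi[of R] u by simp

lemma gi_bdd: "bdd_below {s. DF M s > u}"
proof (rule bdd_belowI[of _ "-R"])
  fix s assume "s \<in> {s. DF M s > u}"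
  then have "DF M s > u" by simp
  then show "- R \<le> s" using lo[of s] u by (metis linorder_not_le not_less_iff_gr_or_eq)
qed

lemma gi_le: "DF M s > u \<Longrightarrow> gen_inv M u \<le> s"
  unfolding gen_inv_def' by (rule cInf_lower) (use gi_bdd in auto)

lemma gi_upper: "gen_inv M u \<le> R"
  using gi_ne gi_le by simp

lemma gi_lower: "- R \<le> gen_inv M u"
  unfolding gen_inv_def'
proof (rule cInf_greatest)
  show "{s. u < DF M s} \<noteq> {}" using gi_ne by blast
  fix s assume "s \<in> {s. DF M s > u}"
  then have "DF M s > u" by simp
  then show "- R \<le> s" using lo[of s] u by (metis linorder_not_le not_less_iff_gr_or_eq)
qed

lemma gi_ge:
  assumes "gen_inv M u \<le> s" shows "u \<le> DF M s"
proof (rule ccontr)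
  assume "\<not> u \<le> DF M s"
  then have lt: "DF M s < u" by simp
  have "((DF M) \<longlongrightarrow> DF M s) (at_right s)"
    using cdf_is_right_cont[of s] by (simp add: continuous_within)
  then have "eventually (\<lambda>x. DF M x < u) (at_right s)"
    using lt by (rule order_tendstoD(2))
  then obtain b where b: "b > s" "\<And>y. y > s \<Longrightarrow> y < b \<Longrightarrow> DF M y < u"
    unfolding eventually_at_right_field by blast
  define y where "y = (s + b) / 2"
  have y: "y > s" "DF M y < u" using b unfolding y_def by auto
  have "y \<le> gen_inv M u"
    unfolding gen_inv_def'
  proof (rule cInf_greatest)
    show "{s. u < DF M s} \<noteq> {}" using gi_ne by blast
    fix t assume "t \<in> {s. DF M s > u}"
    then have "DF M y < DF M t" using y by simp
    then show "y \<le> t" using cdf_nondecreasing[of t y] by linarith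
  qed
  then show False using y assms by simp
qed

lemma gi_less_iff: "gen_inv M u < a \<longleftrightarrow> (\<exists>q\<in>\<rat>. q < a \<and> DF M q > u)"
proof
  assume "gen_inv M u < a"
  then obtain s where s: "s \<in> {s. DF M s > u}" "s < a"
    unfolding gen_inv_def' using cInf_less_iff[OF _ gi_bdd] gi_ne by blast
  obtain q where q: "q \<in> \<rat>" "s < q" "q < a" using Rats_dense_in_real[OF s(2)] by blast
  have "DF M q > u" using s(1) cdf_nondecreasing[of s q] q by simp
  then show "\<exists>q\<in>\<rat>. q < a \<and> DF M q > u" using q by blast
next
  assume "\<exists>q\<in>\<rat>. q < a \<and> DF M q > u"
  then obtain q where "q < a" "DF M q > u" by blast
  then show "gen_inv M u < a" using gi_le[of q] by linarith
qed

end

lemma gi_mono: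
  assumes "0 \<le> u1" "u1 \<le> u2" "u2 < 1"
  shows "gen_inv M u1 \<le> gen_inv M u2"
  unfolding gen_inv_def'
proof (rule cInf_mono)
  have "R \<in> {s. u2 < DF M s}" using assms by (intro gi_ne) auto
  then show "{s. u2 < DF M s} \<noteq> {}" by blast
  show "bdd_below {s. u1 < DF M s}" using assms by (intro gi_bdd) auto
  fix b assume "b \<in> {s. u2 < DF M s}"
  then have "b \<in> {s. u1 < DF M s}" using assms by simp
  then show "\<exists>a\<in>{s. u1 < DF M s}. a \<le> b" by blast
qed

lemma gi_empty:
  assumes "u \<ge> 1" shows "gen_inv M u = Inf {}"
proof -
  have "\<not> DF M s > u" for s using cdf_bounded_prob[of s] assms by linarith
  then have "{s. DF M s > u} = {}" by blast
  then show ?thesis unfolding gen_inv_def' by simp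
qed

end

context bdd_dist
begin

lemma cdt_alt:
  fixes \<rho> :: "real measure"
  assumes rho: "real_distribution \<rho>"
  defines "Q' \<equiv> (\<lambda>u. if u < 0 then - R else if u < 1 then gen_inv M u else R)"
  shows "cdt \<rho> M = (\<lambda>x. if DF \<rho> x < 1 then Q' (DF \<rho> x) else Inf {})"
    and "mono Q'"
proof -
  interpret r: real_distribution \<rho> by (rule rho)
  show "cdt \<rho> M = (\<lambda>x. if DF \<rho> x < 1 then Q' (DF \<rho> x) else Inf {})"
  proof
    fix x
    have "DF \<rho> x \<ge> 0" by (rule r.cdf_nonneg)
    then show "cdt \<rho> M x = (if DF \<rho> x < 1 then Q' (DF \<rho> x) else Inf {})"
      unfolding cdt_def cdf_eq Q'_def using gi_empty[of "DF \<rho> x"] by auto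
  qed
  show "mono Q'"
  proof (rule monoI)
    fix a b :: real assume ab: "a \<le> b"
    show "Q' a \<le> Q' b"
    proof (cases "a < 0")
      case True
      then show ?thesis unfolding Q'_def using gi_lower[of b] R_nonneg by auto
    next
      case a0: False
      show ?thesis
      proof (cases "b < 1")
        case True
        then show ?thesis unfolding Q'_def using a0 ab gi_mono[of a b] by auto
      next
        case False
        then show ?thesis unfolding Q'_def using a0 gi_upper[of a] by auto
      qed
    qed
  qed
qed

lemma cdt_meas:
  fixes \<rho> :: "real measure"
  assumes rho: "real_distribution \<rho>"
  shows "cdt \<rho> M \<in> borel_measurable borel"
proof -
  define Q' where "Q' = (\<lambda>u. if u < 0 then - R else if u < 1 then gen_inv M u else R)"
  have [measurable]: "Q' \<in> borel_measurable borel"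
    using cdt_alt(2)[OF rho] unfolding Q'_def by (rule borel_measurable_mono)
  have [measurable]: "DF \<rho> \<in> borel_measurable borel"
    using real_distribution.cdf_meas[OF rho] .
  have "cdt \<rho> M = (\<lambda>x. if DF \<rho> x < 1 then Q' (DF \<rho> x) else Inf {})"
    using cdt_alt(1)[OF rho] unfolding Q'_def by simp
  then show ?thesis by simp
qed

lemma cdt_distr:
  fixes \<rho> :: "real measure"
  assumes rho: "real_distribution \<rho>" and noat: "\<And>x. measure \<rho> {x} = 0"
  shows "distr \<rho> borel (cdt \<rho> M) = M"
proof -
  interpret r: real_distribution \<rho> by (rule rho)
  have DFm: "DF \<rho> \<in> borel_measurable borel" by (rule r.cdf_meas)
  have cm: "cdt \<rho> M \<in> borel_measurable borel" by (rule cdt_meas[OF rho])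
  have meas: "cdt \<rho> M \<in> measurable \<rho> borel"
    using cm measurable_cong_sets[OF r.events_eq_borel refl] by blast
  have rd: "real_distribution (distr \<rho> borel (cdt \<rho> M))"
    using meas by (rule r.real_distribution_distr)
  have "DF (distr \<rho> borel (cdt \<rho> M)) s = DF M s" for s
  proof -
    have "DF (distr \<rho> borel (cdt \<rho> M)) s = measure \<rho> {x. cdt \<rho> M x \<le> s}"
      using meas by (simp add: cdf_def2 measure_distr vimage_def)
    also have "\<dots> = DF M s"
    proof (rule antisym)
      have Fs: "0 \<le> DF M s" "DF M s \<le> 1" using cdf_nonneg cdf_bounded_prob by auto
      have sub: "{x. cdt \<rho> M x \<le> s} \<subseteq> {x. DF \<rho> x \<le> DF M s} \<union> (space \<rho> - {x. DF \<rho> x < 1})"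
      proof
        fix x assume x: "x \<in> {x. cdt \<rho> M x \<le> s}"
        show "x \<in> {x. DF \<rho> x \<le> DF M s} \<union> (space \<rho> - {x. DF \<rho> x < 1})"
        proof (cases "DF \<rho> x < 1")
          case True
          have "0 \<le> DF \<rho> x" by (rule r.cdf_nonneg)
          then have "DF \<rho> x \<le> DF M s" using x True gi_ge[of "DF \<rho> x" s]
            unfolding cdt_def cdf_eq by simp
          then show ?thesis by simp
        qed simp
      qed
      have m1: "{x. DF \<rho> x \<le> DF M s} \<in> sets \<rho>"
        using borel_measurable_le[OF DFm borel_measurable_const] by simp
      have m2: "{x. DF \<rho> x < 1} \<in> sets \<rho>"
        using borel_measurable_less[OF DFm borel_measurable_const] by simp
      have m3: "{x. cdt \<rho> M x \<le> s} \<in> sets \<rho>"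
        using borel_measurable_le[OF cm borel_measurable_const] by simp
      have "measure \<rho> {x. cdt \<rho> M x \<le> s}
          \<le> measure \<rho> ({x. DF \<rho> x \<le> DF M s} \<union> (space \<rho> - {x. DF \<rho> x < 1}))"
        using sub m1 m2 by (intro r.finite_measure_mono) auto
      also have "\<dots> \<le> measure \<rho> {x. DF \<rho> x \<le> DF M s} + measure \<rho> (space \<rho> - {x. DF \<rho> x < 1})"
        using m1 m2 by (intro measure_Un_le) auto
      also have "measure \<rho> (space \<rho> - {x. DF \<rho> x < 1}) = 0"
        using r.prob_compl[OF m2] r.unif_eq(2)[OF noat, of 1] by simp
      also have "measure \<rho> {x. DF \<rho> x \<le> DF M s} = DF M s"
        using r.unif_eq(1)[OF noat Fs] .
      finally show "measure \<rho> {x. cdt \<rho> M x \<le> s} \<le> DF M s" by simp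
      have sub2: "{x. DF \<rho> x < DF M s} \<subseteq> {x. cdt \<rho> M x \<le> s}"
      proof
        fix x assume x: "x \<in> {x. DF \<rho> x < DF M s}"
        have "0 \<le> DF \<rho> x" by (rule r.cdf_nonneg)
        moreover have "DF \<rho> x < 1" using x Fs by simp
        ultimately have "gen_inv M (DF \<rho> x) \<le> s" using x by (intro gi_le) auto
        then show "x \<in> {x. cdt \<rho> M x \<le> s}" unfolding cdt_def cdf_eq by simp
      qed
      have "DF M s = measure \<rho> {x. DF \<rho> x < DF M s}"
        using r.unif_eq(2)[OF noat Fs] by simp
      also have "\<dots> \<le> measure \<rho> {x. cdt \<rho> M x \<le> s}"
        using sub2 m3 by (intro r.finite_measure_mono) auto
      finally show "DF M s \<le> measure \<rho> {x. cdt \<rho> M x \<le> s}" .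
    qed
    finally show ?thesis .
  qed
  then have "DF (distr \<rho> borel (cdt \<rho> M)) = DF M" by (rule ext)
  then show ?thesis
    by (rule cdf_unique[OF rd real_distribution_axioms])
qed

lemma cdt_integral:
  fixes \<rho> :: "real measure" and f :: "real \<Rightarrow> real"
  assumes rho: "real_distribution \<rho>" and noat: "\<And>x. measure \<rho> {x} = 0"
    and f: "f \<in> borel_measurable borel"
  shows "(\<integral>x. f (cdt \<rho> M x) \<partial>\<rho>) = (\<integral>s. f s \<partial>M)"
proof -
  have cm: "cdt \<rho> M \<in> borel_measurable borel" by (rule cdt_meas[OF rho])
  have meas: "cdt \<rho> M \<in> measurable \<rho> borel"
    using cm measurable_cong_sets[OF real_distribution.events_eq_borel[OF rho] refl] by blast
  have "(\<integral>s. f s \<partial>M) = (\<integral>s. f s \<partial>distr \<rho> borel (cdt \<rho> M))"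
    using cdt_distr[OF rho noat] by simp
  also have "\<dots> = (\<integral>x. f (cdt \<rho> M x) \<partial>\<rho>)"
    by (rule integral_distr[OF meas f])
  finally show ?thesis by simp
qed

end


definition n1 :: "real measure \<Rightarrow> real measure \<Rightarrow> real \<Rightarrow> real" where
  "n1 \<rho> \<nu> t = (cdt \<rho> \<nu> t - mean \<rho> (cdt \<rho> \<nu>)) / std \<rho> (cdt \<rho> \<nu>)"

context bdd_dist
begin

lemma AE_bdd: "AE s in M. - R \<le> s \<and> s \<le> R"
proof -
  have "((DF M) \<longlongrightarrow> measure M {..< -R}) (at_left (-R))" by (rule cdf_at_left)
  moreover have "eventually (\<lambda>s. DF M s = 0) (at_left (-R))"
    unfolding eventually_at_left_field using lo by (intro exI[of _ "-R - 1"]) auto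
  then have "((DF M) \<longlongrightarrow> 0) (at_left (-R))" by (rule tendsto_eventually)
  ultimately have m1: "measure M {..< -R} = 0" using tendsto_unique[of "at_left (-R)"] by auto
  have "measure M {..R} = 1" using hi[of R] by (simp add: cdf_def2)
  then have m2: "measure M (space M - {..R}) = 0" by (subst prob_compl) auto
  have "measure M ({..< -R} \<union> (space M - {..R})) \<le> measure M {..< -R} + measure M (space M - {..R})"
    by (intro measure_Un_le) auto
  then have "measure M ({..< -R} \<union> (space M - {..R})) = 0"
    using m1 m2 measure_nonneg[of M "{..< -R} \<union> (space M - {..R})"] by linarith
  then show ?thesis
    by (subst AE_iff_measurable[where N="{..< -R} \<union> (space M - {..R})"])
       (auto simp: emeasure_eq_measure)
qed

lemma integrable_bdd:
  fixes f :: "real \<Rightarrow> real"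
  assumes f: "f \<in> borel_measurable borel" and B: "\<And>s. - R \<le> s \<Longrightarrow> s \<le> R \<Longrightarrow> \<bar>f s\<bar> \<le> B"
  shows "integrable M f"
proof (rule integrable_const_bound[where B=B])
  show "AE x in M. norm (f x) \<le> B" using AE_bdd by (rule eventually_mono) (use B in auto)
  show "f \<in> borel_measurable M" using f measurable_cong_sets[OF events_eq_borel refl] by blast
qed

context
  fixes c d :: real
  assumes c: "c > 0"
begin

definition "M' = distr M borel (\<lambda>s. c * s + d)"

lemma aff_meas: "(\<lambda>s. c * s + d) \<in> measurable M borel"
proof -
  have "(\<lambda>s::real. c * s + d) \<in> borel_measurable borel" by measurable
  then show ?thesis using measurable_cong_sets[OF events_eq_borel refl] by blast
qed

lemma DF_aff: "DF M' s = DF M ((s - d) / c)"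
proof -
  have "(\<lambda>x. c * x + d) -` {..s} \<inter> space M = {..(s - d) / c}"
    using c by (auto simp: field_simps)
  then show ?thesis unfolding M'_def cdf_def2 using aff_meas by (simp add: measure_distr)
qed

lemma bdd_aff: "bdd_dist M' (c * R + \<bar>d\<bar>)"
proof -
  have rd: "real_distribution M'" unfolding M'_def using aff_meas by (rule real_distribution_distr)
  have a1: "DF M' s = 0" if "s < - (c * R + \<bar>d\<bar>)" for s
  proof -
    have "s - d < - R * c" using that c by (simp add: algebra_simps mult.commute)
    then have "(s - d) / c < - R" using c by (simp add: pos_divide_less_eq)
    then show "DF M' s = 0" unfolding DF_aff by (rule lo)
  qed
  have a2: "DF M' s = 1" if "s \<ge> c * R + \<bar>d\<bar>" for s
  proof -
    have "s - d \<ge> R * c" using that c by (simp add: algebra_simps mult.commute)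
    then have "(s - d) / c \<ge> R" using c by (simp add: pos_le_divide_eq)
    then show "DF M' s = 1" unfolding DF_aff by (rule hi)
  qed
  show ?thesis unfolding bdd_dist_def bdd_dist_axioms_def using rd a1 a2 by blast
qed

lemma gi_aff:
  assumes u: "0 \<le> u" "u < 1"
  shows "gen_inv M' u = c * gen_inv M u + d"
proof -
  interpret b': bdd_dist M' "c * R + \<bar>d\<bar>" by (rule bdd_aff)
  have ne: "{s. u < DF M' s} \<noteq> {}"
  proof -
    have "c * R + \<bar>d\<bar> \<in> {s. u < DF M' s}" using u by (intro b'.gi_ne) auto
    then show ?thesis by blast
  qed
  have ne0: "{s. u < DF M s} \<noteq> {}"
  proof -
    have "R \<in> {s. u < DF M s}" using u by (intro gi_ne) auto
    then show ?thesis by blast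
  qed
  have bdd': "bdd_below {s. u < DF M' s}" using u by (intro b'.gi_bdd) auto
  have bdd0: "bdd_below {s. u < DF M s}" using u by (intro gi_bdd) auto
  show ?thesis
  proof (rule antisym)
    have "gen_inv M' u \<le> c * s + d" if "s \<in> {s. u < DF M s}" for s
    proof -
      have "DF M' (c * s + d) > u" using that c unfolding DF_aff by simp
      then show ?thesis using u by (intro b'.gi_le) auto
    qed
    then have "(gen_inv M' u - d) / c \<le> s" if "s \<in> {s. u < DF M s}" for s
    proof -
      have "gen_inv M' u - d \<le> s * c" using \<open>s \<in> {s. u < DF M s} \<Longrightarrow> gen_inv M' u \<le> c * s + d\<close>[OF that]
        by (simp add: mult.commute)
      then show ?thesis using c by (simp add: pos_divide_le_eq)
    qed
    then have "(gen_inv M' u - d) / c \<le> Inf {s. u < DF M s}"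
      using ne0 by (intro cInf_greatest) auto
    then show "gen_inv M' u \<le> c * gen_inv M u + d"
      unfolding gen_inv_def' using c by (simp add: field_simps)
  next
    have "c * gen_inv M u + d \<le> s" if "s \<in> {s. u < DF M' s}" for s
    proof -
      have "DF M ((s - d) / c) > u" using that unfolding DF_aff by simp
      then have "gen_inv M u \<le> (s - d) / c" using u by (intro gi_le) auto
      then show ?thesis using c by (simp add: field_simps)
    qed
    then show "c * gen_inv M u + d \<le> gen_inv M' u"
      unfolding b'.gen_inv_def' using ne by (intro cInf_greatest) auto
  qed
qed

lemma n1_aff:
  fixes \<rho> :: "real measure"
  assumes rho: "real_distribution \<rho>" and noat: "\<And>x. measure \<rho> {x} = 0"
    and t: "DF \<rho> t < 1"
  shows "n1 \<rho> M' t = n1 \<rho> M t"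
proof -
  interpret b': bdd_dist M' "c * R + \<bar>d\<bar>" by (rule bdd_aff)
  interpret r: real_distribution \<rho> by (rule rho)
  have int_aff: "(\<integral>s. f s \<partial>M') = (\<integral>s. f (c * s + d) \<partial>M)" if "f \<in> borel_measurable borel" for f :: "real \<Rightarrow> real"
    unfolding M'_def by (rule integral_distr[OF aff_meas that])
  have intid: "integrable M (\<lambda>s. s)"
    by (rule integrable_bdd[where B=R]) auto
  define m where "m = (\<integral>s. s \<partial>M)"
  have mean0: "mean \<rho> (cdt \<rho> M) = m"
    unfolding mean_def m_def using cdt_integral[OF rho noat, of "\<lambda>s. s"] by simp
  have "mean \<rho> (cdt \<rho> M') = (\<integral>s. s \<partial>M')"
    unfolding mean_def using b'.cdt_integral[OF rho noat, of "\<lambda>s. s"] by simp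
  also have "\<dots> = (\<integral>s. c * s + d \<partial>M)" using int_aff[of "\<lambda>s. s"] by simp
  also have "\<dots> = c * m + d"
    unfolding m_def using intid prob_space by simp
  finally have mean1: "mean \<rho> (cdt \<rho> M') = c * m + d" .
  define v where "v = (\<integral>s. (s - m)\<^sup>2 \<partial>M)"
  have std0: "std \<rho> (cdt \<rho> M) = sqrt v"
    unfolding std_def mean0 v_def using cdt_integral[OF rho noat, of "\<lambda>s. (s - m)\<^sup>2"] by simp
  have "std \<rho> (cdt \<rho> M') = sqrt (\<integral>s. (s - (c * m + d))\<^sup>2 \<partial>M')"
    unfolding std_def mean1 using b'.cdt_integral[OF rho noat, of "\<lambda>s. (s - (c * m + d))\<^sup>2"] by simp
  also have "(\<integral>s. (s - (c * m + d))\<^sup>2 \<partial>M') = (\<integral>s. (c * s + d - (c * m + d))\<^sup>2 \<partial>M)"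
    using int_aff[of "\<lambda>s. (s - (c * m + d))\<^sup>2"] by simp
  also have "\<dots> = (\<integral>s. c\<^sup>2 * (s - m)\<^sup>2 \<partial>M)"
    by (rule Bochner_Integration.integral_cong) (auto simp: power2_eq_square algebra_simps)
  also have "\<dots> = c\<^sup>2 * v" unfolding v_def by simp
  finally have std1: "std \<rho> (cdt \<rho> M') = c * sqrt v"
    using c by (simp add: real_sqrt_mult)
  have u: "0 \<le> DF \<rho> t" "DF \<rho> t < 1" using r.cdf_nonneg t by auto
  have cdt1: "cdt \<rho> M' t = c * cdt \<rho> M t + d"
    unfolding cdt_def cdf_eq using gi_aff[OF u] .
  show ?thesis
    unfolding n1_def cdt1 mean1 std1 mean0 std0 using c
    by (cases "v = 0") (auto simp: field_simps)
qed

end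

end


lemma supp_compl_null:
  fixes \<mu> :: "(real^2) measure"
  assumes sets: "sets \<mu> = sets borel"
  shows "UNIV - mu_support \<mu> \<in> null_sets \<mu>"
proof -
  define F where "F = {ball x e | x e. e > 0 \<and> emeasure \<mu> (ball x e) = 0}"
  have Fo: "\<And>S. S \<in> F \<Longrightarrow> open S" unfolding F_def by auto
  obtain F' where F': "F' \<subseteq> F" "countable F'" "\<Union>F' = \<Union>F" using Lindelof[OF Fo] by blast
  have eq: "\<Union>F = UNIV - mu_support \<mu>"
  proof
    show "\<Union>F \<subseteq> UNIV - mu_support \<mu>"
    proof
      fix z assume "z \<in> \<Union>F"
      then obtain x e where xe: "z \<in> ball x e" "e > 0" "emeasure \<mu> (ball x e) = 0" unfolding F_def by blast
      define e' where "e' = e - dist x z"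
      have e': "e' > 0" using xe(1) unfolding e'_def by (simp add: dist_commute)
      have "ball z e' \<subseteq> ball x e"
      proof
        fix w assume "w \<in> ball z e'"
        then have "dist z w < e'" by simp
        moreover have "dist x w \<le> dist x z + dist z w" by (rule dist_triangle)
        ultimately show "w \<in> ball x e" unfolding e'_def by simp
      qed
      then have "emeasure \<mu> (ball z e') \<le> emeasure \<mu> (ball x e)"
        by (intro emeasure_mono) (auto simp: sets)
      then have "emeasure \<mu> (ball z e') = 0" using xe(3) by simp
      then show "z \<in> UNIV - mu_support \<mu>" unfolding mu_support_def using e' by force
    qed
    show "UNIV - mu_support \<mu> \<subseteq> \<Union>F"
    proof
      fix z assume "z \<in> UNIV - mu_support \<mu>"
      then obtain e where "e > 0" "\<not> emeasure \<mu> (ball z e) > 0" unfolding mu_support_def by blast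
      then have "ball z e \<in> F" unfolding F_def by (auto simp: not_less)
      moreover have "z \<in> ball z e" using \<open>e > 0\<close> by simp
      ultimately show "z \<in> \<Union>F" by blast
    qed
  qed
  have "(\<Union>S\<in>F'. S) \<in> null_sets \<mu>"
  proof (rule null_sets_UN'[OF F'(2)])
    fix S assume "S \<in> F'"
    then have "S \<in> F" using F'(1) by blast
    then obtain x e where "S = ball x e" "emeasure \<mu> (ball x e) = 0" unfolding F_def by blast
    then show "S \<in> null_sets \<mu>" using sets by (auto simp: null_sets_def)
  qed
  then show ?thesis using F'(3) eq by simp
qed

lemma Pcstar_props:
  assumes "\<mu> \<in> Pcstar"
  shows "sets \<mu> = sets borel" "prob_space \<mu>" "compact (mu_support \<mu>)"
    "\<not> (\<exists>L. is_line L \<and> mu_support \<mu> \<subseteq> L)"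
  using assms unfolding Pcstar_def by auto

lemma Pcstar_R:
  assumes "\<mu> \<in> Pcstar"
  obtains R where "R > 0" "mu_support \<mu> \<subseteq> cball 0 R"
proof -
  have "bounded (mu_support \<mu>)" using Pcstar_props(3)[OF assms] compact_imp_bounded by blast
  then obtain R where "R > 0" "\<And>x. x \<in> mu_support \<mu> \<Longrightarrow> norm x \<le> R"
    using bounded_pos by blast
  then show ?thesis using that by (auto simp: subset_iff)
qed

lemma AE_supp:
  assumes "\<mu> \<in> Pcstar"
  shows "AE x in \<mu>. x \<in> mu_support \<mu>"
proof -
  have "UNIV - mu_support \<mu> \<in> null_sets \<mu>"
    by (rule supp_compl_null[OF Pcstar_props(1)[OF assms]])
  then show ?thesis
    by (rule AE_I') auto
qed

lemma meas_inner[measurable]: "(\<lambda>x::real^2. x \<bullet> \<theta>) \<in> borel_measurable borel"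
  by (intro borel_measurable_continuous_onI continuous_intros)

lemma meas_cong_mu:
  assumes "\<mu> \<in> Pcstar" "f \<in> borel_measurable borel"
  shows "f \<in> borel_measurable \<mu>"
  using assms(2) measurable_cong_sets[OF Pcstar_props(1)[OF assms(1)] refl] by blast

lemma integrable_mu:
  fixes f :: "real^2 \<Rightarrow> real"
  assumes mu: "\<mu> \<in> Pcstar" and R: "mu_support \<mu> \<subseteq> cball 0 R"
    and f: "f \<in> borel_measurable borel" and B: "\<And>x. norm x \<le> R \<Longrightarrow> \<bar>f x\<bar> \<le> B"
  shows "integrable \<mu> f"
proof -
  interpret prob_space \<mu> by (rule Pcstar_props(2)[OF mu])
  show ?thesis
  proof (rule integrable_const_bound[where B=B])
    show "AE x in \<mu>. norm (f x) \<le> B"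
      using AE_supp[OF mu] by (rule eventually_mono) (use R B in auto)
    show "f \<in> borel_measurable \<mu>" by (rule meas_cong_mu[OF mu f])
  qed
qed

lemma radon_bdd:
  assumes mu: "\<mu> \<in> Pcstar" and R: "mu_support \<mu> \<subseteq> cball 0 R" "R \<ge> 0"
  shows "bdd_dist (radon \<theta> \<mu>) (R * norm \<theta>)"
proof -
  interpret p: prob_space \<mu> by (rule Pcstar_props(2)[OF mu])
  have im: "(\<lambda>x. x \<bullet> \<theta>) \<in> measurable \<mu> borel" by (rule meas_cong_mu[OF mu meas_inner])
  have rd: "real_distribution (radon \<theta> \<mu>)" unfolding radon_def by (rule p.real_distribution_distr[OF im])
  have DFr: "DF (radon \<theta> \<mu>) s = measure \<mu> {x. x \<bullet> \<theta> \<le> s}" for s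
  proof -
    have "(\<lambda>x. x \<bullet> \<theta>) -` {..s} \<inter> space \<mu> = {x. x \<bullet> \<theta> \<le> s}"
      using sets_eq_imp_space_eq[OF Pcstar_props(1)[OF mu]] by auto
    then show ?thesis unfolding radon_def cdf_def2 using im by (simp add: measure_distr)
  qed
  have ip: "\<bar>x \<bullet> \<theta>\<bar> \<le> R * norm \<theta>" if "x \<in> mu_support \<mu>" for x
  proof -
    have "\<bar>x \<bullet> \<theta>\<bar> \<le> norm x * norm \<theta>" by (rule Cauchy_Schwarz_ineq2)
    also have "\<dots> \<le> R * norm \<theta>" using R that by (intro mult_right_mono) auto
    finally show ?thesis .
  qed
  have null: "UNIV - mu_support \<mu> \<in> null_sets \<mu>" by (rule supp_compl_null[OF Pcstar_props(1)[OF mu]])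
  have a1: "DF (radon \<theta> \<mu>) s = 0" if "s < - (R * norm \<theta>)" for s
  proof -
    have "{x. x \<bullet> \<theta> \<le> s} \<subseteq> UNIV - mu_support \<mu>" using ip that by force
    moreover have "{x. x \<bullet> \<theta> \<le> s} \<in> sets \<mu>"
    proof -
      have "{x::real^2. x \<bullet> \<theta> \<le> s} \<in> sets borel" by measurable
      then show ?thesis using Pcstar_props(1)[OF mu] by simp
    qed
    ultimately have "{x. x \<bullet> \<theta> \<le> s} \<in> null_sets \<mu>" using null null_sets_subset by blast
    then show ?thesis unfolding DFr by (simp add: measure_eq_0_null_sets)
  qed
  have a2: "DF (radon \<theta> \<mu>) s = 1" if "s \<ge> R * norm \<theta>" for s
  proof -
    have "{x. \<not> x \<bullet> \<theta> \<le> s} \<subseteq> UNIV - mu_support \<mu>" using ip that by force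
    moreover have "{x. \<not> x \<bullet> \<theta> \<le> s} \<in> sets \<mu>"
    proof -
      have "{x::real^2. \<not> x \<bullet> \<theta> \<le> s} \<in> sets borel" by measurable
      then show ?thesis using Pcstar_props(1)[OF mu] by simp
    qed
    ultimately have "{x. \<not> x \<bullet> \<theta> \<le> s} \<in> null_sets \<mu>" using null null_sets_subset by blast
    then have "AE x in \<mu>. x \<bullet> \<theta> \<le> s" by (rule AE_I') auto
    then have "p.prob {x \<in> space \<mu>. x \<bullet> \<theta> \<le> s} = 1"
      using im by (subst p.prob_Collect_eq_1) auto
    then show ?thesis unfolding DFr
      using sets_eq_imp_space_eq[OF Pcstar_props(1)[OF mu]] by simp
  qed
  show ?thesis unfolding bdd_dist_def bdd_dist_axioms_def using rd a1 a2 by blast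
qed


definition mom1 :: "(real^2) measure \<Rightarrow> real^2 \<Rightarrow> real" where
  "mom1 \<mu> \<theta> = (\<integral>x. x \<bullet> \<theta> \<partial>\<mu>)"

definition var1 :: "(real^2) measure \<Rightarrow> real^2 \<Rightarrow> real" where
  "var1 \<mu> \<theta> = (\<integral>x. (x \<bullet> \<theta> - mom1 \<mu> \<theta>)\<^sup>2 \<partial>\<mu>)"

lemma NRCDT_formula:
  assumes mu: "\<mu> \<in> Pcstar" and rho: "real_distribution \<rho>" and noat: "\<And>x. measure \<rho> {x} = 0"
  shows "NRCDT \<rho> \<mu> t \<theta> = (cdt \<rho> (radon \<theta> \<mu>) t - mom1 \<mu> \<theta>) / sqrt (var1 \<mu> \<theta>)"
proof -
  obtain R where R: "R > 0" "mu_support \<mu> \<subseteq> cball 0 R" by (rule Pcstar_R[OF mu])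
  interpret b: bdd_dist "radon \<theta> \<mu>" "R * norm \<theta>" by (rule radon_bdd[OF mu R(2)]) (use R in auto)
  have im: "(\<lambda>x. x \<bullet> \<theta>) \<in> measurable \<mu> borel" by (rule meas_cong_mu[OF mu meas_inner])
  have int: "(\<integral>s. f s \<partial>radon \<theta> \<mu>) = (\<integral>x. f (x \<bullet> \<theta>) \<partial>\<mu>)" if "f \<in> borel_measurable borel" for f :: "real \<Rightarrow> real"
    unfolding radon_def by (rule integral_distr[OF im that])
  have m: "mean \<rho> (cdt \<rho> (radon \<theta> \<mu>)) = mom1 \<mu> \<theta>"
    unfolding mean_def mom1_def using b.cdt_integral[OF rho noat, of "\<lambda>s. s"] int[of "\<lambda>s. s"] by simp
  have s: "std \<rho> (cdt \<rho> (radon \<theta> \<mu>)) = sqrt (var1 \<mu> \<theta>)"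
    unfolding std_def m var1_def
    using b.cdt_integral[OF rho noat, of "\<lambda>s. (s - mom1 \<mu> \<theta>)\<^sup>2"] int[of "\<lambda>s. (s - mom1 \<mu> \<theta>)\<^sup>2"] by simp
  show ?thesis unfolding NRCDT_def m s ..
qed

lemma mom1_meas:
  assumes mu: "\<mu> \<in> Pcstar"
  shows "mom1 \<mu> \<in> borel_measurable borel"
proof -
  interpret sigma_finite_measure \<mu> using Pcstar_props(2)[OF mu] by (rule prob_space_imp_sigma_finite)
  have [measurable_cong]: "sets \<mu> = sets borel" by (rule Pcstar_props(1)[OF mu])
  have "(\<lambda>(\<theta>, x). x \<bullet> \<theta>) \<in> borel_measurable (borel \<Otimes>\<^sub>M \<mu>)" by measurable
  then have "(\<lambda>\<theta>. \<integral>x. x \<bullet> \<theta> \<partial>\<mu>) \<in> borel_measurable borel"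
    by (rule borel_measurable_lebesgue_integral[where f="\<lambda>\<theta> x. x \<bullet> \<theta>", simplified])
  then show ?thesis unfolding mom1_def[abs_def] .
qed

lemma var1_meas:
  assumes mu: "\<mu> \<in> Pcstar"
  shows "var1 \<mu> \<in> borel_measurable borel"
proof -
  interpret sigma_finite_measure \<mu> using Pcstar_props(2)[OF mu] by (rule prob_space_imp_sigma_finite)
  have [measurable_cong]: "sets \<mu> = sets borel" by (rule Pcstar_props(1)[OF mu])
  have [measurable]: "mom1 \<mu> \<in> borel_measurable borel" by (rule mom1_meas[OF mu])
  have "(\<lambda>(\<theta>, x). (x \<bullet> \<theta> - mom1 \<mu> \<theta>)\<^sup>2) \<in> borel_measurable (borel \<Otimes>\<^sub>M \<mu>)" by measurable
  then have "(\<lambda>\<theta>. \<integral>x. (x \<bullet> \<theta> - mom1 \<mu> \<theta>)\<^sup>2 \<partial>\<mu>) \<in> borel_measurable borel"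
    by (rule borel_measurable_lebesgue_integral[where f="\<lambda>\<theta> x. (x \<bullet> \<theta> - mom1 \<mu> \<theta>)\<^sup>2", simplified])
  then show ?thesis unfolding var1_def[abs_def] .
qed

lemma DF_radon_meas:
  assumes mu: "\<mu> \<in> Pcstar"
  shows "(\<lambda>\<theta>. DF (radon \<theta> \<mu>) q) \<in> borel_measurable borel"
proof -
  interpret sigma_finite_measure \<mu> using Pcstar_props(2)[OF mu] by (rule prob_space_imp_sigma_finite)
  have [measurable_cong]: "sets \<mu> = sets borel" by (rule Pcstar_props(1)[OF mu])
  have sp: "space \<mu> = UNIV" using sets_eq_imp_space_eq[OF Pcstar_props(1)[OF mu]] by simp
  have im: "(\<lambda>x. x \<bullet> \<theta>) \<in> measurable \<mu> borel" for \<theta> by (rule meas_cong_mu[OF mu meas_inner])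
  have eq: "DF (radon \<theta> \<mu>) q = enn2real (emeasure \<mu> (Pair \<theta> -` {(\<theta>, x). x \<bullet> \<theta> \<le> q}))" for \<theta>
  proof -
    have "(\<lambda>x. x \<bullet> \<theta>) -` {..q} \<inter> space \<mu> = Pair \<theta> -` {(\<theta>, x). x \<bullet> \<theta> \<le> q}"
      using sp by auto
    then show ?thesis unfolding radon_def cdf_def2 using im[of \<theta>] by (simp add: emeasure_distr measure_def)
  qed
  have "{p \<in> space (borel \<Otimes>\<^sub>M \<mu>). snd p \<bullet> fst p \<le> q} \<in> sets (borel \<Otimes>\<^sub>M \<mu>)" by measurable
  moreover have "{p \<in> space (borel \<Otimes>\<^sub>M \<mu>). snd p \<bullet> fst p \<le> q} = {(\<theta>, x). x \<bullet> \<theta> \<le> q}"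
    using sp by (auto simp: space_pair_measure)
  ultimately have "{(\<theta>, x). x \<bullet> \<theta> \<le> q} \<in> sets (borel \<Otimes>\<^sub>M \<mu>)" by simp
  then have "(\<lambda>\<theta>. emeasure \<mu> (Pair \<theta> -` {(\<theta>, x). x \<bullet> \<theta> \<le> q})) \<in> borel_measurable borel"
    by (rule measurable_emeasure_Pair)
  then show ?thesis unfolding eq by measurable
qed

lemma cdt_radon_meas:
  assumes mu: "\<mu> \<in> Pcstar" and rho: "real_distribution \<rho>"
  shows "(\<lambda>\<theta>. cdt \<rho> (radon \<theta> \<mu>) t) \<in> borel_measurable borel"
proof -
  interpret r: real_distribution \<rho> by (rule rho)
  obtain R where R: "R > 0" "mu_support \<mu> \<subseteq> cball 0 R" by (rule Pcstar_R[OF mu])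
  have bd: "bdd_dist (radon \<theta> \<mu>) (R * norm \<theta>)" for \<theta> by (rule radon_bdd[OF mu R(2)]) (use R in auto)
  define u where "u = DF \<rho> t"
  have cu: "cdt \<rho> (radon \<theta> \<mu>) t = gen_inv (radon \<theta> \<mu>) u" for \<theta>
    unfolding cdt_def u_def cdf_eq ..
  have u0: "0 \<le> u" "u \<le> 1" unfolding u_def using r.cdf_nonneg r.cdf_bounded_prob by auto
  show ?thesis
  proof (cases "u = 1")
    case True
    have "cdt \<rho> (radon \<theta> \<mu>) t = Inf {}" for \<theta>
      unfolding cu using bdd_dist.gi_empty[OF bd[of \<theta>], of u] True by simp
    then show ?thesis by simp
  next
    case False
    with u0 have u1: "u < 1" by simp
    show ?thesis unfolding cu borel_measurable_iff_less
    proof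
      fix a
      have eq: "{\<theta> \<in> space borel. gen_inv (radon \<theta> \<mu>) u < a}
          = (\<Union>q\<in>\<rat> \<inter> {..<a}. {\<theta> \<in> space borel. u < DF (radon \<theta> \<mu>) q})"
        using bdd_dist.gi_less_iff[OF bd u0(1) u1] by auto
      have "(\<Union>q\<in>\<rat> \<inter> {..<a}. {\<theta> \<in> space borel. u < DF (radon \<theta> \<mu>) q}) \<in> sets borel"
      proof (rule sets.countable_UN')
        show "countable (\<rat> \<inter> {..<a})" using countable_rat by (rule countable_subset[rotated]) auto
        have "{\<theta> \<in> space borel. u < DF (radon \<theta> \<mu>) q} \<in> sets borel" for q
          using DF_radon_meas[OF mu, of q] by measurable
        then show "(\<lambda>q. {\<theta> \<in> space borel. u < DF (radon \<theta> \<mu>) q}) ` (\<rat> \<inter> {..<a}) \<subseteq> sets borel"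
          by blast
      qed
      then show "{\<theta> \<in> space borel. gen_inv (radon \<theta> \<mu>) u < a} \<in> sets borel" unfolding eq .
    qed
  qed
qed

lemma NRCDT_meas:
  assumes mu: "\<mu> \<in> Pcstar" and rho: "real_distribution \<rho>" and noat: "\<And>x. measure \<rho> {x} = 0"
  shows "NRCDT \<rho> \<mu> t \<in> borel_measurable borel"
proof -
  have [measurable]: "mom1 \<mu> \<in> borel_measurable borel" "var1 \<mu> \<in> borel_measurable borel"
    "(\<lambda>\<theta>. cdt \<rho> (radon \<theta> \<mu>) t) \<in> borel_measurable borel"
    using mom1_meas[OF mu] var1_meas[OF mu] cdt_radon_meas[OF mu rho] by auto
  have "NRCDT \<rho> \<mu> t = (\<lambda>\<theta>. (cdt \<rho> (radon \<theta> \<mu>) t - mom1 \<mu> \<theta>) / sqrt (var1 \<mu> \<theta>))"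
    using NRCDT_formula[OF mu rho noat] by auto
  then show ?thesis by simp
qed

lemma inner2: "(x::real^2) \<bullet> y = x$1 * y$1 + x$2 * y$2"
  by (simp add: inner_vec_def sum_2)

lemma var1_expand:
  assumes mu: "\<mu> \<in> Pcstar"
  obtains C11 C12 C22 where "\<And>\<theta>. var1 \<mu> \<theta> = (\<theta>$1)\<^sup>2 * C11 + 2 * (\<theta>$1 * \<theta>$2) * C12 + (\<theta>$2)\<^sup>2 * C22"
proof -
  obtain R where R: "R > 0" "mu_support \<mu> \<subseteq> cball 0 R" by (rule Pcstar_R[OF mu])
  define a1 where "a1 = (\<integral>x. x$1 \<partial>\<mu>)"
  define a2 where "a2 = (\<integral>x. x$2 \<partial>\<mu>)"
  define K where "K = R + \<bar>a1\<bar> + \<bar>a2\<bar>"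
  have cb: "\<bar>x$i - a\<bar> \<le> K" if "norm x \<le> R" "\<bar>a\<bar> \<le> \<bar>a1\<bar> + \<bar>a2\<bar>" for x :: "real^2" and i a
  proof -
    have "\<bar>x$i\<bar> \<le> norm x" by (rule component_le_norm_cart)
    then show ?thesis using that unfolding K_def by linarith
  qed
  have K0: "K \<ge> 0" unfolding K_def using R by simp
  have ic: "integrable \<mu> (\<lambda>x. x$i)" for i
    by (rule integrable_mu[OF mu R(2), where B=R]) (auto intro: order.trans[OF component_le_norm_cart])
  have i11: "integrable \<mu> (\<lambda>x. (x$1 - a1)\<^sup>2)"
  proof (rule integrable_mu[OF mu R(2), where B="K * K"])
    show "(\<lambda>x::real^2. (x$1 - a1)\<^sup>2) \<in> borel_measurable borel" by measurable
    fix x :: "real^2" assume "norm x \<le> R"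
    then have "\<bar>x$1 - a1\<bar> \<le> K" by (intro cb) auto
    then have "\<bar>x$1 - a1\<bar> * \<bar>x$1 - a1\<bar> \<le> K * K" by (intro mult_mono) auto
    then show "\<bar>(x$1 - a1)\<^sup>2\<bar> \<le> K * K"
      by (simp only: power2_eq_square abs_mult)
  qed
  have i22: "integrable \<mu> (\<lambda>x. (x$2 - a2)\<^sup>2)"
  proof (rule integrable_mu[OF mu R(2), where B="K * K"])
    show "(\<lambda>x::real^2. (x$2 - a2)\<^sup>2) \<in> borel_measurable borel" by measurable
    fix x :: "real^2" assume "norm x \<le> R"
    then have "\<bar>x$2 - a2\<bar> \<le> K" by (intro cb) auto
    then have "\<bar>x$2 - a2\<bar> * \<bar>x$2 - a2\<bar> \<le> K * K" by (intro mult_mono) auto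
    then show "\<bar>(x$2 - a2)\<^sup>2\<bar> \<le> K * K"
      by (simp only: power2_eq_square abs_mult)
  qed
  have i12: "integrable \<mu> (\<lambda>x. (x$1 - a1) * (x$2 - a2))"
  proof (rule integrable_mu[OF mu R(2), where B="K * K"])
    show "(\<lambda>x::real^2. (x$1 - a1) * (x$2 - a2)) \<in> borel_measurable borel" by measurable
    fix x :: "real^2" assume "norm x \<le> R"
    then have "\<bar>x$1 - a1\<bar> \<le> K" "\<bar>x$2 - a2\<bar> \<le> K" by (intro cb; auto)+
    then show "\<bar>(x$1 - a1) * (x$2 - a2)\<bar> \<le> K * K"
      by (simp add: abs_mult mult_mono K0)
  qed
  have m: "mom1 \<mu> \<theta> = a1 * \<theta>$1 + a2 * \<theta>$2" for \<theta>
  proof -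
    have "mom1 \<mu> \<theta> = (\<integral>x. x$1 * \<theta>$1 + x$2 * \<theta>$2 \<partial>\<mu>)" unfolding mom1_def inner2 ..
    also have "\<dots> = (\<integral>x. x$1 * \<theta>$1 \<partial>\<mu>) + (\<integral>x. x$2 * \<theta>$2 \<partial>\<mu>)"
      using ic by (intro Bochner_Integration.integral_add) auto
    finally show ?thesis unfolding a1_def a2_def by simp
  qed
  have "var1 \<mu> \<theta> = (\<theta>$1)\<^sup>2 * (\<integral>x. (x$1 - a1)\<^sup>2 \<partial>\<mu>) + 2 * (\<theta>$1 * \<theta>$2) * (\<integral>x. (x$1 - a1) * (x$2 - a2) \<partial>\<mu>)
     + (\<theta>$2)\<^sup>2 * (\<integral>x. (x$2 - a2)\<^sup>2 \<partial>\<mu>)" for \<theta>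
  proof -
    have "var1 \<mu> \<theta> = (\<integral>x. (\<theta>$1)\<^sup>2 * (x$1 - a1)\<^sup>2 + 2 * (\<theta>$1 * \<theta>$2) * ((x$1 - a1) * (x$2 - a2))
        + (\<theta>$2)\<^sup>2 * (x$2 - a2)\<^sup>2 \<partial>\<mu>)"
      unfolding var1_def m inner2
      by (rule Bochner_Integration.integral_cong) (auto simp: power2_eq_square algebra_simps)
    also have "\<dots> = (\<integral>x. (\<theta>$1)\<^sup>2 * (x$1 - a1)\<^sup>2 + 2 * (\<theta>$1 * \<theta>$2) * ((x$1 - a1) * (x$2 - a2)) \<partial>\<mu>)
        + (\<integral>x. (\<theta>$2)\<^sup>2 * (x$2 - a2)\<^sup>2 \<partial>\<mu>)"
      using i11 i12 i22 by (intro Bochner_Integration.integral_add) auto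
    also have "(\<integral>x. (\<theta>$1)\<^sup>2 * (x$1 - a1)\<^sup>2 + 2 * (\<theta>$1 * \<theta>$2) * ((x$1 - a1) * (x$2 - a2)) \<partial>\<mu>)
        = (\<integral>x. (\<theta>$1)\<^sup>2 * (x$1 - a1)\<^sup>2 \<partial>\<mu>) + (\<integral>x. 2 * (\<theta>$1 * \<theta>$2) * ((x$1 - a1) * (x$2 - a2)) \<partial>\<mu>)"
      using i11 i12 by (intro Bochner_Integration.integral_add) auto
    finally show ?thesis by simp
  qed
  then show ?thesis using that by blast
qed


lemma var1_pos:
  assumes mu: "\<mu> \<in> Pcstar" and th: "norm \<theta> = 1"
  shows "var1 \<mu> \<theta> > 0"
proof (rule ccontr)
  assume "\<not> var1 \<mu> \<theta> > 0"
  obtain R where R: "R > 0" "mu_support \<mu> \<subseteq> cball 0 R" by (rule Pcstar_R[OF mu])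
  define m where "m = mom1 \<mu> \<theta>"
  have ib: "\<bar>x \<bullet> \<theta>\<bar> \<le> norm x" for x
    using Cauchy_Schwarz_ineq2[of x \<theta>] th by simp
  have int: "integrable \<mu> (\<lambda>x. (x \<bullet> \<theta> - m)\<^sup>2)"
  proof (rule integrable_mu[OF mu R(2), where B="(R + \<bar>m\<bar>) * (R + \<bar>m\<bar>)"])
    show "(\<lambda>x::real^2. (x \<bullet> \<theta> - m)\<^sup>2) \<in> borel_measurable borel" by measurable
    fix x :: "real^2" assume "norm x \<le> R"
    then have "\<bar>x \<bullet> \<theta> - m\<bar> \<le> R + \<bar>m\<bar>" using ib[of x] by linarith
    then have "\<bar>x \<bullet> \<theta> - m\<bar> * \<bar>x \<bullet> \<theta> - m\<bar> \<le> (R + \<bar>m\<bar>) * (R + \<bar>m\<bar>)" by (intro mult_mono) auto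
    then show "\<bar>(x \<bullet> \<theta> - m)\<^sup>2\<bar> \<le> (R + \<bar>m\<bar>) * (R + \<bar>m\<bar>)" by (simp only: power2_eq_square abs_mult)
  qed
  have nn: "var1 \<mu> \<theta> \<ge> 0" unfolding var1_def by (rule integral_nonneg_AE) auto
  have "var1 \<mu> \<theta> = 0" using nn \<open>\<not> var1 \<mu> \<theta> > 0\<close> by simp
  then have "(\<integral>x. (x \<bullet> \<theta> - m)\<^sup>2 \<partial>\<mu>) = 0" unfolding var1_def m_def .
  then have ae: "AE x in \<mu>. (x \<bullet> \<theta> - m)\<^sup>2 = 0" using integral_nonneg_eq_0_iff_AE[OF int] by simp
  have sets: "sets \<mu> = sets borel" by (rule Pcstar_props(1)[OF mu])
  have sp: "space \<mu> = UNIV" using sets_eq_imp_space_eq[OF sets] by simp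
  have N: "{x. x \<bullet> \<theta> \<noteq> m} \<in> null_sets \<mu>"
  proof -
    have ms: "{x \<in> space \<mu>. \<not> (x \<bullet> \<theta> - m)\<^sup>2 = 0} \<in> sets \<mu>"
    proof -
      have "{x::real^2. \<not> (x \<bullet> \<theta> - m)\<^sup>2 = 0} \<in> sets borel" by measurable
      then show ?thesis using sets sp by simp
    qed
    have "{x \<in> space \<mu>. \<not> (x \<bullet> \<theta> - m)\<^sup>2 = 0} \<in> null_sets \<mu>"
      using ae AE_iff_null[OF ms] by simp
    then show ?thesis using sp by simp
  qed
  have supp: "mu_support \<mu> \<subseteq> {x. x \<bullet> \<theta> = m}"
  proof
    fix x0 assume x0: "x0 \<in> mu_support \<mu>"
    show "x0 \<in> {x. x \<bullet> \<theta> = m}"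
    proof (rule ccontr)
      assume "x0 \<notin> {x. x \<bullet> \<theta> = m}"
      then have e: "\<bar>x0 \<bullet> \<theta> - m\<bar> > 0" by simp
      have sub: "ball x0 \<bar>x0 \<bullet> \<theta> - m\<bar> \<subseteq> {x. x \<bullet> \<theta> \<noteq> m}"
      proof
        fix x assume "x \<in> ball x0 \<bar>x0 \<bullet> \<theta> - m\<bar>"
        then have d: "norm (x - x0) < \<bar>x0 \<bullet> \<theta> - m\<bar>" by (simp add: dist_norm norm_minus_commute)
        have "\<bar>(x - x0) \<bullet> \<theta>\<bar> \<le> norm (x - x0)" by (rule ib)
        then have "\<bar>x \<bullet> \<theta> - x0 \<bullet> \<theta>\<bar> < \<bar>x0 \<bullet> \<theta> - m\<bar>" using d by (simp add: inner_diff_left)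
        then show "x \<in> {x. x \<bullet> \<theta> \<noteq> m}" by auto
      qed
      have "ball x0 \<bar>x0 \<bullet> \<theta> - m\<bar> \<in> null_sets \<mu>"
        using null_sets_subset[OF N _ sub] sets by simp
      then have "emeasure \<mu> (ball x0 \<bar>x0 \<bullet> \<theta> - m\<bar>) = 0" by auto
      moreover have "emeasure \<mu> (ball x0 \<bar>x0 \<bullet> \<theta> - m\<bar>) > 0"
        using x0 e unfolding mu_support_def by blast
      ultimately show False by simp
    qed
  qed
  define v :: "real^2" where "v = (\<chi> i. if i = 1 then - (\<theta>$2) else \<theta>$1)"
  have v1: "v$1 = - (\<theta>$2)" and v2: "v$2 = \<theta>$1" unfolding v_def by auto
  have t1: "(\<theta>$1)\<^sup>2 + (\<theta>$2)\<^sup>2 = 1"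
    using power2_norm_eq_inner[of \<theta>] th unfolding inner2 by (simp add: power2_eq_square)
  have "v \<noteq> 0"
  proof
    assume "v = 0"
    then have "\<theta>$1 = 0" "\<theta>$2 = 0" using v1 v2 by auto
    then show False using t1 by simp
  qed
  have line: "is_line {m *\<^sub>R \<theta> + s *\<^sub>R v | s. True}"
    unfolding is_line_def using \<open>v \<noteq> 0\<close> by (intro exI[of _ "m *\<^sub>R \<theta>"] exI[of _ v]) simp
  have "{x. x \<bullet> \<theta> = m} \<subseteq> {m *\<^sub>R \<theta> + s *\<^sub>R v | s. True}"
  proof
    fix x assume "x \<in> {x. x \<bullet> \<theta> = m}"
    then have xm: "x$1 * \<theta>$1 + x$2 * \<theta>$2 = m" unfolding inner2 by simp
    have xv: "x \<bullet> v = - (x$1 * \<theta>$2) + x$2 * \<theta>$1" unfolding inner2 v1 v2 by simp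
    have c1: "x$1 = m * \<theta>$1 + (x \<bullet> v) * v$1"
    proof -
      have "m * \<theta>$1 + (x \<bullet> v) * v$1 = x$1 * ((\<theta>$1)\<^sup>2 + (\<theta>$2)\<^sup>2)"
        unfolding xv v1 xm[symmetric] by (simp add: algebra_simps power2_eq_square)
      then show ?thesis using t1 by simp
    qed
    have c2: "x$2 = m * \<theta>$2 + (x \<bullet> v) * v$2"
    proof -
      have "m * \<theta>$2 + (x \<bullet> v) * v$2 = x$2 * ((\<theta>$1)\<^sup>2 + (\<theta>$2)\<^sup>2)"
        unfolding xv v2 xm[symmetric] by (simp add: algebra_simps power2_eq_square)
      then show ?thesis using t1 by simp
    qed
    have "x = m *\<^sub>R \<theta> + (x \<bullet> v) *\<^sub>R v"
      unfolding vec_eq_iff forall_2 using c1 c2 by simp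
    then show "x \<in> {m *\<^sub>R \<theta> + s *\<^sub>R v | s. True}" by blast
  qed
  then have "mu_support \<mu> \<subseteq> {m *\<^sub>R \<theta> + s *\<^sub>R v | s. True}" using supp by (rule order.trans[rotated])
  then show False using Pcstar_props(4)[OF mu] line by blast
qed

lemma var1_lower:
  assumes mu: "\<mu> \<in> Pcstar"
  obtains \<sigma> where "\<sigma> > 0" "\<And>\<theta>. norm \<theta> = 1 \<Longrightarrow> \<sigma> \<le> var1 \<mu> \<theta>"
proof -
  obtain C11 C12 C22 where C: "\<And>\<theta>::real^2. var1 \<mu> \<theta> = (\<theta>$1)\<^sup>2 * C11 + 2 * (\<theta>$1 * \<theta>$2) * C12 + (\<theta>$2)\<^sup>2 * C22"
    using var1_expand[OF mu] by metis
  have "continuous_on (sphere 0 1) (\<lambda>\<theta>::real^2. (\<theta>$1)\<^sup>2 * C11 + 2 * (\<theta>$1 * \<theta>$2) * C12 + (\<theta>$2)\<^sup>2 * C22)"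
    by (intro continuous_intros)
  then have "continuous_on (sphere 0 1) (var1 \<mu>)" using C by simp
  moreover have "sphere (0::real^2) 1 \<noteq> {}" by simp
  ultimately obtain \<theta>0 where th0: "\<theta>0 \<in> sphere 0 1" "\<And>\<theta>. \<theta> \<in> sphere 0 1 \<Longrightarrow> var1 \<mu> \<theta>0 \<le> var1 \<mu> \<theta>"
    using continuous_attains_inf[OF compact_sphere] by blast
  have "var1 \<mu> \<theta>0 > 0" using th0(1) by (intro var1_pos[OF mu]) auto
  moreover have "\<And>\<theta>. norm \<theta> = 1 \<Longrightarrow> var1 \<mu> \<theta>0 \<le> var1 \<mu> \<theta>" using th0(2) by auto
  ultimately show ?thesis using that by blast
qed


lemma circ_meas: "(\<lambda>t::real. (\<chi> i::2. if i = 1 then cos t else sin t)) \<in> borel_measurable borel"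
proof -
  have "(\<lambda>t::real. (\<chi> i::2. if i = 1 then cos t else sin t)) = (\<lambda>t. cos t *\<^sub>R axis 1 1 + sin t *\<^sub>R axis 2 1)"
    by (auto simp: vec_eq_iff forall_2 axis_def)
  moreover have "(\<lambda>t::real. cos t *\<^sub>R (axis 1 1 :: real^2) + sin t *\<^sub>R axis 2 1) \<in> borel_measurable borel"
    by (intro borel_measurable_continuous_onI continuous_intros)
  ultimately show ?thesis by simp
qed

lemma AE_circle: "AE \<theta> in circle_measure. norm \<theta> = 1"
proof -
  have m: "(\<lambda>t::real. (\<chi> i::2. if i = 1 then cos t else sin t)) \<in> measurable (restrict_space lborel {0..2*pi}) borel"
    using circ_meas by (intro measurable_restrict_space1) simp
  have s: "{x \<in> space borel. norm (x::real^2) = 1} \<in> sets borel" by measurable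
  have n: "norm (\<chi> i::2. if i = 1 then cos t else sin t) = 1" for t :: real
  proof -
    have "(norm (\<chi> i::2. if i = 1 then cos t else sin t))\<^sup>2 = 1"
      unfolding power2_norm_eq_inner inner2 by (simp add: power2_eq_square[symmetric])
    then show ?thesis using norm_ge_zero[of "\<chi> i::2. if i = 1 then cos t else sin t"]
      by (simp add: power2_eq_1_iff)
  qed
  show ?thesis unfolding circle_measure_def
    by (subst AE_distr_iff[OF m s]) (simp add: n)
qed

lemma mom1_bound:
  assumes mu: "\<mu> \<in> Pcstar" and R: "mu_support \<mu> \<subseteq> cball 0 R" and th: "norm \<theta> = 1"
  shows "\<bar>mom1 \<mu> \<theta>\<bar> \<le> R"
proof -
  interpret prob_space \<mu> by (rule Pcstar_props(2)[OF mu])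
  have ib: "\<bar>x \<bullet> \<theta>\<bar> \<le> norm x" for x
    using Cauchy_Schwarz_ineq2[of x \<theta>] th by simp
  have int: "integrable \<mu> (\<lambda>x. x \<bullet> \<theta>)"
    by (rule integrable_mu[OF mu R meas_inner, where B=R]) (metis ib order_trans)
  have ae: "AE x in \<mu>. \<bar>x \<bullet> \<theta>\<bar> \<le> R"
    using AE_supp[OF mu]
  proof (rule eventually_mono)
    fix x assume "x \<in> mu_support \<mu>"
    then have "norm x \<le> R" using R by auto
    then show "\<bar>x \<bullet> \<theta>\<bar> \<le> R" using ib[of x] by linarith
  qed
  have "mom1 \<mu> \<theta> \<le> (\<integral>x. R \<partial>\<mu>)" unfolding mom1_def
    by (rule integral_mono_AE[OF int]) (use ae in \<open>auto elim: eventually_mono\<close>)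
  moreover have "(\<integral>x. - R \<partial>\<mu>) \<le> mom1 \<mu> \<theta>" unfolding mom1_def
    by (rule integral_mono_AE[OF _ int]) (use ae in \<open>auto elim: eventually_mono\<close>)
  ultimately show ?thesis by (simp add: prob_space)
qed

lemma cdt_bound:
  assumes mu: "\<mu> \<in> Pcstar" and R: "mu_support \<mu> \<subseteq> cball 0 R" "R \<ge> 0" and th: "norm \<theta> = 1"
    and rho: "real_distribution \<rho>"
  shows "\<bar>cdt \<rho> (radon \<theta> \<mu>) t\<bar> \<le> max R \<bar>Inf {}\<bar>"
proof -
  interpret r: real_distribution \<rho> by (rule rho)
  interpret b: bdd_dist "radon \<theta> \<mu>" R using radon_bdd[OF mu R, of \<theta>] th by simp
  define u where "u = DF \<rho> t"
  have cu: "cdt \<rho> (radon \<theta> \<mu>) t = gen_inv (radon \<theta> \<mu>) u"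
    unfolding cdt_def u_def cdf_eq ..
  have u0: "0 \<le> u" "u \<le> 1" unfolding u_def using r.cdf_nonneg r.cdf_bounded_prob by auto
  show ?thesis
  proof (cases "u = 1")
    case True
    then show ?thesis unfolding cu using b.gi_empty[of u] by simp
  next
    case False
    then have "u < 1" using u0 by simp
    then show ?thesis unfolding cu using b.gi_lower[OF u0(1)] b.gi_upper[OF u0(1)] by simp
  qed
qed

lemma NRCDT_bound:
  assumes mu: "\<mu> \<in> Pcstar" and rho: "real_distribution \<rho>" and noat: "\<And>x. measure \<rho> {x} = 0"
  obtains Mb where "Mb \<ge> 0" "\<And>t (\<theta>::real^2). norm \<theta> = 1 \<Longrightarrow> \<bar>NRCDT \<rho> \<mu> t \<theta>\<bar> \<le> Mb"
proof -
  obtain R where R: "R > 0" "mu_support \<mu> \<subseteq> cball 0 R" by (rule Pcstar_R[OF mu])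
  obtain \<sigma> where s: "\<sigma> > 0" "\<And>\<theta>::real^2. norm \<theta> = 1 \<Longrightarrow> \<sigma> \<le> var1 \<mu> \<theta>" using var1_lower[OF mu] by metis
  define Mb where "Mb = (max R \<bar>Inf {}\<bar> + R) / sqrt \<sigma>"
  have "Mb \<ge> 0" unfolding Mb_def using R s by auto
  moreover have "\<bar>NRCDT \<rho> \<mu> t \<theta>\<bar> \<le> Mb" if th: "norm \<theta> = 1" for t \<theta>
  proof -
    have num: "\<bar>cdt \<rho> (radon \<theta> \<mu>) t - mom1 \<mu> \<theta>\<bar> \<le> max R \<bar>Inf {}\<bar> + R"
      using cdt_bound[OF mu R(2) _ th rho, of t] mom1_bound[OF mu R(2) th] R by linarith
    have den: "sqrt \<sigma> \<le> sqrt (var1 \<mu> \<theta>)" using s(2)[OF th] by simp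
    have sp: "sqrt \<sigma> > 0" using s by simp
    have "\<bar>NRCDT \<rho> \<mu> t \<theta>\<bar> = \<bar>cdt \<rho> (radon \<theta> \<mu>) t - mom1 \<mu> \<theta>\<bar> / sqrt (var1 \<mu> \<theta>)"
      unfolding NRCDT_formula[OF mu rho noat] using s(1) s(2)[OF th] by (simp add: abs_divide)
    also have "\<dots> \<le> (max R \<bar>Inf {}\<bar> + R) / sqrt (var1 \<mu> \<theta>)"
      using num sp den by (intro divide_right_mono) auto
    also have "\<dots> \<le> (max R \<bar>Inf {}\<bar> + R) / sqrt \<sigma>"
      using sp den R by (intro divide_left_mono) auto
    finally show ?thesis unfolding Mb_def .
  qed
  ultimately show ?thesis using that by blast
qed

lemma NRCDT_Linf:
  assumes mu: "\<mu> \<in> Pcstar" and rho: "real_distribution \<rho>" and noat: "\<And>x. measure \<rho> {x} = 0"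
  obtains Mb where "\<And>t::real. NRCDT \<rho> \<mu> t \<in> Linf_S1" "\<And>t. ess_norm circle_measure (NRCDT \<rho> \<mu> t) \<le> Mb"
proof -
  obtain Mb where Mb: "Mb \<ge> 0" "\<And>t (\<theta>::real^2). norm \<theta> = 1 \<Longrightarrow> \<bar>NRCDT \<rho> \<mu> t \<theta>\<bar> \<le> Mb"
    using NRCDT_bound[OF mu rho noat] by metis
  have ae: "AE \<theta> in circle_measure. \<bar>NRCDT \<rho> \<mu> t \<theta>\<bar> \<le> Mb" for t
    using AE_circle by (rule eventually_mono) (rule Mb(2))
  have sc: "sets circle_measure = sets borel" unfolding circle_measure_def by simp
  have L: "NRCDT \<rho> \<mu> t \<in> Linf_S1" for t
  proof -
    have "NRCDT \<rho> \<mu> t \<in> borel_measurable borel" by (rule NRCDT_meas[OF mu rho noat])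
    then have "NRCDT \<rho> \<mu> t \<in> borel_measurable circle_measure"
      using measurable_cong_sets[OF sc refl] by blast
    then show ?thesis unfolding Linf_S1_def ess_bounded_def using ae[of t] by blast
  qed
  have E: "ess_norm circle_measure (NRCDT \<rho> \<mu> t) \<le> Mb" for t
    unfolding ess_norm_def
  proof (rule cInf_lower)
    show "Mb \<in> {C. 0 \<le> C \<and> (AE x in circle_measure. \<bar>NRCDT \<rho> \<mu> t x\<bar> \<le> C)}"
      using Mb(1) ae[of t] by simp
    show "bdd_below {C. 0 \<le> C \<and> (AE x in circle_measure. \<bar>NRCDT \<rho> \<mu> t x\<bar> \<le> C)}"
      by (rule bdd_belowI[of _ 0]) simp
  qed
  show ?thesis using that L E by blast
qed

lemma Nh_Linf:
  assumes mu: "\<mu> \<in> Pcstar" and rho: "real_distribution \<rho>" and noat: "\<And>x. measure \<rho> {x} = 0"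
    and h: "admissible_h h"
  shows "NRCDT_h h \<rho> \<mu> \<in> Linf_rho \<rho>"
proof -
  obtain Mb where Mb: "\<And>t::real. NRCDT \<rho> \<mu> t \<in> Linf_S1" "\<And>t. ess_norm circle_measure (NRCDT \<rho> \<mu> t) \<le> Mb"
    using NRCDT_Linf[OF mu rho noat] by metis
  have hb: "\<forall>B \<subseteq> Linf_S1. (\<exists>M. \<forall>g\<in>B. ess_norm circle_measure g \<le> M) \<longrightarrow> bounded (h ` B)"
    using h unfolding admissible_h_def by blast
  have "range (NRCDT \<rho> \<mu>) \<subseteq> Linf_S1" using Mb(1) by auto
  moreover have "\<exists>M. \<forall>g\<in>range (NRCDT \<rho> \<mu>). ess_norm circle_measure g \<le> M" using Mb(2) by auto
  ultimately have "bounded (h ` range (NRCDT \<rho> \<mu>))" using hb by blast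
  then obtain K where K: "\<And>y. y \<in> h ` range (NRCDT \<rho> \<mu>) \<Longrightarrow> norm y \<le> K"
    unfolding bounded_iff by blast
  have "\<bar>NRCDT_h h \<rho> \<mu> t\<bar> \<le> K" for t
    unfolding NRCDT_h_def using K[of "h (NRCDT \<rho> \<mu> t)"] by auto
  then show ?thesis unfolding Linf_rho_def ess_bounded_def by (intro CollectI exI[of _ K]) simp
qed


lemma supp_image:
  fixes T :: "real^2 \<Rightarrow> real^2"
  assumes sets: "sets \<mu> = sets borel" and cT: "continuous_on UNIV T"
  shows "T ` mu_support \<mu> \<subseteq> mu_support (distr \<mu> borel T)"
proof
  fix z assume "z \<in> T ` mu_support \<mu>"
  then obtain x where x: "x \<in> mu_support \<mu>" "z = T x" by blast
  have Tm: "T \<in> measurable \<mu> borel"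
    using borel_measurable_continuous_onI[OF cT] measurable_cong_sets[OF sets refl] by blast
  have sp: "space \<mu> = UNIV" using sets_eq_imp_space_eq[OF sets] by simp
  show "z \<in> mu_support (distr \<mu> borel T)" unfolding mu_support_def
  proof (intro CollectI allI impI)
    fix e :: real assume e: "e > 0"
    have op: "open (T -` ball z e)" using cT by (intro open_vimage) auto
    moreover have "x \<in> T -` ball z e" using x e by simp
    ultimately obtain d where d: "d > 0" "ball x d \<subseteq> T -` ball z e"
      using open_contains_ball by blast
    have "0 < emeasure \<mu> (ball x d)" using x(1) d(1) unfolding mu_support_def by blast
    also have "\<dots> \<le> emeasure \<mu> (T -` ball z e \<inter> space \<mu>)"
      using d(2) sets sp borel_open[OF op] by (intro emeasure_mono) auto
    also have "\<dots> = emeasure (distr \<mu> borel T) (ball z e)"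
      using Tm by (simp add: emeasure_distr)
    finally show "0 < emeasure (distr \<mu> borel T) (ball z e)" .
  qed
qed

lemma distr_id_borel:
  assumes sets: "sets \<mu> = sets (borel :: (real^2) measure)"
  shows "distr \<mu> borel (\<lambda>x. x) = \<mu>"
proof (rule measure_eqI)
  show "sets (distr \<mu> borel (\<lambda>x. x)) = sets \<mu>" using sets by simp
  have sp: "space \<mu> = UNIV" using sets_eq_imp_space_eq[OF sets] by simp
  fix A assume "A \<in> sets (distr \<mu> borel (\<lambda>x. x))"
  then have "A \<in> sets borel" by simp
  moreover have "(\<lambda>x. x) \<in> measurable \<mu> borel"
    by (rule measurable_ident_sets[OF sets])
  ultimately show "emeasure (distr \<mu> borel (\<lambda>x. x)) A = emeasure \<mu> A"
    using sp by (simp add: emeasure_distr)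
qed

lemma affine_push_Pcstar:
  assumes mu: "\<mu> \<in> Pcstar" and A: "invertible A"
  shows "affine_push A y \<mu> \<in> Pcstar"
proof -
  obtain A' where A': "A ** A' = mat 1" "A' ** A = mat 1" using A unfolding invertible_def by blast
  define T where "T x = A *v x + y" for x
  define Ti where "Ti z = A' *v (z - y)" for z
  have TiT: "Ti (T x) = x" for x unfolding T_def Ti_def by (simp add: matrix_vector_mul_assoc A')
  have TTi: "T (Ti z) = z" for z unfolding T_def Ti_def by (simp add: matrix_vector_mul_assoc A')
  have lc: "continuous_on UNIV (\<lambda>x. B *v x)" for B :: "real^2^2"
    by (rule linear_continuous_on[OF matrix_vector_mul_bounded_linear])
  have cT: "continuous_on UNIV T" unfolding T_def
    by (intro continuous_on_add lc continuous_on_const)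
  have "Ti = (\<lambda>z. A' *v z - A' *v y)" unfolding Ti_def by (auto simp: matrix_vector_mult_diff_distrib)
  then have cTi: "continuous_on UNIV Ti"
    by (simp add: continuous_on_diff lc continuous_on_const)
  have sets: "sets \<mu> = sets borel" by (rule Pcstar_props(1)[OF mu])
  have Tm: "T \<in> measurable \<mu> borel"
    using borel_measurable_continuous_onI[OF cT] measurable_cong_sets[OF sets refl] by blast
  have Tib: "Ti \<in> measurable borel borel" using borel_measurable_continuous_onI[OF cTi] .
  define \<nu> where "\<nu> = distr \<mu> borel T"
  have push: "affine_push A y \<mu> = \<nu>" unfolding affine_push_def \<nu>_def T_def ..
  have setsN: "sets \<nu> = sets borel" unfolding \<nu>_def by simp
  have bk: "distr \<nu> borel Ti = \<mu>"
  proof -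
    have "distr \<nu> borel Ti = distr \<mu> borel (Ti \<circ> T)" unfolding \<nu>_def by (rule distr_distr[OF Tib Tm])
    also have "Ti \<circ> T = (\<lambda>x. x)" using TiT by auto
    finally show ?thesis using distr_id_borel[OF sets] by simp
  qed
  have s1: "T ` mu_support \<mu> \<subseteq> mu_support \<nu>" unfolding \<nu>_def by (rule supp_image[OF sets cT])
  have s2: "Ti ` mu_support \<nu> \<subseteq> mu_support \<mu>" using supp_image[OF setsN cTi] bk by simp
  have seq: "mu_support \<nu> = T ` mu_support \<mu>"
  proof
    show "mu_support \<nu> \<subseteq> T ` mu_support \<mu>"
    proof
      fix z assume "z \<in> mu_support \<nu>"
      then have "Ti z \<in> mu_support \<mu>" using s2 by blast
      then show "z \<in> T ` mu_support \<mu>" by (rule image_eqI[of z T "Ti z", OF TTi[symmetric]])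
    qed
  qed (rule s1)
  have ps: "prob_space \<nu>" unfolding \<nu>_def
    using prob_space.prob_space_distr[OF Pcstar_props(2)[OF mu] Tm] .
  have cp: "compact (mu_support \<nu>)" unfolding seq
    using compact_continuous_image[OF continuous_on_subset[OF cT] Pcstar_props(3)[OF mu]] by simp
  have nl: "\<not> (\<exists>L. is_line L \<and> mu_support \<nu> \<subseteq> L)"
  proof
    assume "\<exists>L. is_line L \<and> mu_support \<nu> \<subseteq> L"
    then obtain L where L: "is_line L" "mu_support \<nu> \<subseteq> L" by blast
    then obtain p v where pv0: "v \<noteq> 0" "L = {p + s *\<^sub>R v | s. True}"
      unfolding is_line_def by blast
    then have pv: "v \<noteq> 0" "mu_support \<nu> \<subseteq> {p + s *\<^sub>R v | s. True}" using L(2) by auto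
    have "A' *v v \<noteq> 0"
    proof
      assume "A' *v v = 0"
      then have "A *v (A' *v v) = 0" by simp
      then show False using pv(1) by (simp add: matrix_vector_mul_assoc A')
    qed
    then have line: "is_line {Ti p + s *\<^sub>R (A' *v v) | s. True}"
      unfolding is_line_def by (intro exI[of _ "Ti p"] exI[of _ "A' *v v"]) simp
    have "mu_support \<mu> \<subseteq> {Ti p + s *\<^sub>R (A' *v v) | s. True}"
    proof
      fix x assume "x \<in> mu_support \<mu>"
      then have "T x \<in> mu_support \<nu>" using s1 by blast
      then obtain s where "T x = p + s *\<^sub>R v" using pv(2) by blast
      then have "x = Ti (p + s *\<^sub>R v)" using TiT[of x] by simp
      also have "\<dots> = Ti p + s *\<^sub>R (A' *v v)" unfolding Ti_def
        by (simp add: algebra_simps)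
      finally show "x \<in> {Ti p + s *\<^sub>R (A' *v v) | s. True}" by blast
    qed
    then show False using Pcstar_props(4)[OF mu] line by blast
  qed
  show ?thesis unfolding push Pcstar_def using setsN ps cp nl by (intro CollectI conjI)
qed


lemma NRCDT_n1: "NRCDT \<rho> \<mu> t \<theta> = n1 \<rho> (radon \<theta> \<mu>) t"
  unfolding NRCDT_def n1_def ..

lemma inner_matrix: "(A *v x) \<bullet> (\<theta>::real^2) = x \<bullet> (transpose A *v \<theta>)"
  for A :: "real^2^2"
  using dot_lmul_matrix[of x "transpose A" \<theta>] by simp

lemma NRCDT_push:
  assumes mu: "\<mu> \<in> Pcstar" and A: "invertible A"
    and rho: "real_distribution \<rho>" and noat: "\<And>x. measure \<rho> {x} = 0" and t: "DF \<rho> t < 1"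
  shows "NRCDT \<rho> (affine_push A y \<mu>) t = NRCDT \<rho> \<mu> t \<circ> phiA A"
proof
  fix \<theta> :: "real^2"
  define T where "T x = A *v x + y" for x
  have sets: "sets \<mu> = sets borel" by (rule Pcstar_props(1)[OF mu])
  have lc: "continuous_on UNIV (\<lambda>x. B *v x)" for B :: "real^2^2"
    by (rule linear_continuous_on[OF matrix_vector_mul_bounded_linear])
  have cT: "continuous_on UNIV T" unfolding T_def
    by (intro continuous_on_add lc continuous_on_const)
  have Tm: "T \<in> measurable \<mu> borel"
    using borel_measurable_continuous_onI[OF cT] measurable_cong_sets[OF sets refl] by blast
  have push: "affine_push A y \<mu> = distr \<mu> borel T" unfolding affine_push_def T_def ..
  have rp: "radon \<theta> (affine_push A y \<mu>) = distr \<mu> borel (\<lambda>x. T x \<bullet> \<theta>)"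
    unfolding push radon_def by (subst distr_distr[OF meas_inner Tm]) (simp add: o_def)
  show "NRCDT \<rho> (affine_push A y \<mu>) t \<theta> = (NRCDT \<rho> \<mu> t \<circ> phiA A) \<theta>"
  proof (cases "\<theta> = 0")
    case True
    have "phiA A \<theta> = 0" unfolding phiA_def True by simp
    moreover have "radon \<theta> (affine_push A y \<mu>) = radon 0 \<mu>"
      unfolding rp using True by (simp add: radon_def)
    ultimately show ?thesis unfolding NRCDT_n1 o_def by simp
  next
    case False
    obtain A' where A': "A ** A' = mat 1" "A' ** A = mat 1" using A unfolding invertible_def by blast
    define w where "w = transpose A *v \<theta>"
    have "w \<noteq> 0"
    proof
      assume "w = 0"
      then have "transpose A' *v w = 0" by simp
      moreover have "transpose A' ** transpose A = mat 1"
        using A'(1) by (metis matrix_transpose_mul transpose_mat)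
      ultimately have "\<theta> = 0" unfolding w_def
        by (metis matrix_vector_mul_assoc matrix_vector_mul_lid)
      then show False using False by simp
    qed
    define c where "c = norm w"
    have c: "c > 0" unfolding c_def using \<open>w \<noteq> 0\<close> by simp
    define \<phi> where "\<phi> = phiA A \<theta>"
    have \<phi>: "\<phi> = (1 / c) *\<^sub>R w" unfolding \<phi>_def phiA_def c_def w_def ..
    define d where "d = y \<bullet> \<theta>"
    obtain R where R: "R > 0" "mu_support \<mu> \<subseteq> cball 0 R" by (rule Pcstar_R[OF mu])
    have bd: "bdd_dist (radon \<phi> \<mu>) (R * norm \<phi>)" by (rule radon_bdd[OF mu R(2)]) (use R in auto)
    have im: "(\<lambda>x. x \<bullet> \<phi>) \<in> measurable \<mu> borel" by (rule meas_cong_mu[OF mu meas_inner])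
    have affm: "(\<lambda>s::real. c * s + d) \<in> borel_measurable borel" by measurable
    have "bdd_dist.M' (radon \<phi> \<mu>) c d = distr (radon \<phi> \<mu>) borel (\<lambda>s. c * s + d)"
      by (rule bdd_dist.M'_def[OF bd c])
    also have "\<dots> = distr \<mu> borel (\<lambda>x. c * (x \<bullet> \<phi>) + d)"
      unfolding radon_def by (subst distr_distr[OF affm im]) (simp add: o_def)
    also have "\<dots> = radon \<theta> (affine_push A y \<mu>)"
    proof -
      have "c * (x \<bullet> \<phi>) + d = T x \<bullet> \<theta>" for x
      proof -
        have "c * (x \<bullet> \<phi>) = x \<bullet> w" unfolding \<phi> using c by simp
        then show ?thesis unfolding T_def d_def w_def by (simp add: inner_add_left inner_matrix)
      qed
      then show ?thesis unfolding rp by simp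
    qed
    finally have eq: "radon \<theta> (affine_push A y \<mu>) = bdd_dist.M' (radon \<phi> \<mu>) c d" by simp
    show ?thesis unfolding NRCDT_n1 o_def eq \<phi>_def[symmetric]
      by (rule bdd_dist.n1_aff[OF bd c rho noat t])
  qed
qed

lemma Nh_push_AE:
  assumes mu: "\<mu> \<in> Pcstar" and A: "invertible A"
    and rho: "real_distribution \<rho>" and noat: "\<And>x. measure \<rho> {x} = 0"
    and h: "admissible_h h"
  shows "AE t in \<rho>. NRCDT_h h \<rho> (affine_push A y \<mu>) t = NRCDT_h h \<rho> \<mu> t"
proof -
  obtain Mb where Mb: "\<And>t::real. NRCDT \<rho> \<mu> t \<in> Linf_S1"
    using NRCDT_Linf[OF mu rho noat] by metis
  have inv: "\<forall>g\<in>Linf_S1. \<forall>A::real^2^2. invertible A \<longrightarrow> h (g \<circ> phiA A) = h g"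
    using h unfolding admissible_h_def by blast
  show ?thesis
    using real_distribution.cdf_less_1_AE[OF rho noat]
  proof (rule eventually_mono)
    fix t assume t: "DF \<rho> t < 1"
    show "NRCDT_h h \<rho> (affine_push A y \<mu>) t = NRCDT_h h \<rho> \<mu> t"
      unfolding NRCDT_h_def NRCDT_push[OF mu A rho noat t]
      using inv Mb[of t] A by blast
  qed
qed

theorem theorem12:
  fixes \<rho> :: "real measure"
    and h :: "(real^2 \<Rightarrow> real) \<Rightarrow> real"
    and \<mu>0 \<nu>0 :: "(real^2) measure"
  assumes rho_sets: "sets \<rho> = sets borel"
    and rho_prob: "prob_space \<rho>"
    and rho_no_atoms: "\<And>x. measure \<rho> {x} = 0"
    and h_adm: "admissible_h h"
    and mu0: "\<mu>0 \<in> Pcstar" and nu0: "\<nu>0 \<in> Pcstar"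
    and neq: "\<not> (AE t in \<rho>. NRCDT_h h \<rho> \<mu>0 t = NRCDT_h h \<rho> \<nu>0 t)"
  shows "{affine_push A y \<mu>0 | A y. invertible A} \<subseteq> Pcstar
       \<and> {affine_push A y \<nu>0 | A y. invertible A} \<subseteq> Pcstar
       \<and> lin_separable \<rho> (NRCDT_h h \<rho> ` {affine_push A y \<mu>0 | A y. invertible A})
                         (NRCDT_h h \<rho> ` {affine_push A y \<nu>0 | A y. invertible A})"
proof -
  have rho: "real_distribution \<rho>"
    unfolding real_distribution_def real_distribution_axioms_def using rho_sets rho_prob by simp
  have F: "{affine_push A y \<mu>0 | A y. invertible A} \<subseteq> Pcstar"
    using affine_push_Pcstar[OF mu0] by blast
  have G: "{affine_push A y \<nu>0 | A y. invertible A} \<subseteq> Pcstar"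
    using affine_push_Pcstar[OF nu0] by blast
  have S: "NRCDT_h h \<rho> ` {affine_push A y \<mu>0 | A y. invertible A}
      \<subseteq> {f \<in> Linf_rho \<rho>. AE t in \<rho>. f t = NRCDT_h h \<rho> \<mu>0 t}"
  proof
    fix f assume "f \<in> NRCDT_h h \<rho> ` {affine_push A y \<mu>0 | A y. invertible A}"
    then obtain A y where Ay: "invertible A" "f = NRCDT_h h \<rho> (affine_push A y \<mu>0)" by blast
    have "f \<in> Linf_rho \<rho>" unfolding Ay(2)
      by (rule Nh_Linf[OF affine_push_Pcstar[OF mu0 Ay(1)] rho rho_no_atoms h_adm])
    moreover have "AE t in \<rho>. f t = NRCDT_h h \<rho> \<mu>0 t"
      unfolding Ay(2) by (rule Nh_push_AE[OF mu0 Ay(1) rho rho_no_atoms h_adm])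
    ultimately show "f \<in> {f \<in> Linf_rho \<rho>. AE t in \<rho>. f t = NRCDT_h h \<rho> \<mu>0 t}" by blast
  qed
  have T: "NRCDT_h h \<rho> ` {affine_push A y \<nu>0 | A y. invertible A}
      \<subseteq> {f \<in> Linf_rho \<rho>. AE t in \<rho>. f t = NRCDT_h h \<rho> \<nu>0 t}"
  proof
    fix f assume "f \<in> NRCDT_h h \<rho> ` {affine_push A y \<nu>0 | A y. invertible A}"
    then obtain A y where Ay: "invertible A" "f = NRCDT_h h \<rho> (affine_push A y \<nu>0)" by blast
    have "f \<in> Linf_rho \<rho>" unfolding Ay(2)
      by (rule Nh_Linf[OF affine_push_Pcstar[OF nu0 Ay(1)] rho rho_no_atoms h_adm])
    moreover have "AE t in \<rho>. f t = NRCDT_h h \<rho> \<nu>0 t"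
      unfolding Ay(2) by (rule Nh_push_AE[OF nu0 Ay(1) rho rho_no_atoms h_adm])
    ultimately show "f \<in> {f \<in> Linf_rho \<rho>. AE t in \<rho>. f t = NRCDT_h h \<rho> \<nu>0 t}" by blast
  qed
  have "lin_separable \<rho> (NRCDT_h h \<rho> ` {affine_push A y \<mu>0 | A y. invertible A})
                         (NRCDT_h h \<rho> ` {affine_push A y \<nu>0 | A y. invertible A})"
    by (rule separation_Linf[OF Nh_Linf[OF mu0 rho rho_no_atoms h_adm]
          Nh_Linf[OF nu0 rho rho_no_atoms h_adm] neq S T])
  then show ?thesis using F G by blast
qed


end
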